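(* Let $n=4$ and let $M$ be a $2\times 2$ Griffiths positive matrix of constant coefficient $(1,1)$-forms on $\mathbb{C}^4$ with diagonalized entries. Then $\Omega=\det(M)$ is a Lefschetz form for the bidegrees $(2,0)$, $(1,1)$ and $(0,2)$.
   Context: $V^{p,q}$ is the space of constant coefficient $(p,q)$-forms on $\mathbb{C}^n$. A $(1,1)$-form is Kähler if it equals $\sum_l\frac{\sqrt{-1}}{2}dw_l\wedge d\overline{w_l}$ in some complex linear coordinates. A matrix $M=(\alpha_{i,j})$ of $(1,1)$-forms with $\alpha_{i,j}=\overline{\alpha_{j,i}}$ is Griffiths positive if $\sum_{i,j}\theta_i\alpha_{i,j}\overline{\theta_j}$ is Kähler for every nonzero $\theta$. $M$ has diagonalized entries if in some complex linear coordinates $(z_l)$ every entry is $\sum_l b_{i,j}^{(l)}\frac{\sqrt{-1}}{2}dz_l\wedge d\overline{z_l}$. $\det(M)=\alpha_{1,1}\wedge\alpha_{2,2}-\alpha_{1,2}\wedge\alpha_{2,1}$. $\Omega\in V^{k,k}$ is a Lefschetz form for bidegree $(p,q)$, $p+q=n-k$, if $\alpha\mapsto\alpha\wedge\Omega$ is an isomorphism $V^{p,q}\to V^{n-q,n-p}$. *)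

theory Defs
  imports Complex_Main
begin

text \<open>Constant coefficient forms on C^n, as elements of the exterior algebra
 generated by dz_0,...,dz_(n-1) (index j) and dzbar_0,...,dzbar_(n-1) (index n+j).
 A form is its coefficient function on (increasingly ordered) finite index sets.\<close>

type_synonym form = "nat set \<Rightarrow> complex"

definition wsign :: "nat set \<Rightarrow> nat set \<Rightarrow> complex" where
  "wsign A B = (-1) ^ card {(a, b). a \<in> A \<and> b \<in> B \<and> b < a}"

definition wedge :: "form \<Rightarrow> form \<Rightarrow> form" where
  "wedge a b = (\<lambda>S. \<Sum>T\<in>Pow S. wsign T (S - T) * a T * b (S - T))"

definition Vpq :: "nat \<Rightarrow> nat \<Rightarrow> nat \<Rightarrow> form set" where
  "Vpq n p q = {\<omega>. \<forall>S. \<omega> S \<noteq> 0 \<longrightarrow>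
      S \<subseteq> {..<2*n} \<and> card (S \<inter> {..<n}) = p \<and> card (S \<inter> {n..<2*n}) = q}"

text \<open>complex conjugation of forms: swaps dz_j and dzbar_j\<close>
definition cswap :: "nat \<Rightarrow> nat \<Rightarrow> nat" where
  "cswap n i = (if i < n then i + n else if i < 2*n then i - n else i)"

definition conj_form :: "nat \<Rightarrow> form \<Rightarrow> form" where
  "conj_form n \<omega> = (\<lambda>S. let T = cswap n ` S in
     (-1) ^ card {(a, b). a \<in> T \<and> b \<in> T \<and> a < b \<and> cswap n b < cswap n a} * cnj (\<omega> T))"

definition dZ :: "nat \<Rightarrow> (nat \<Rightarrow> complex) \<Rightarrow> form" where
  "dZ n c = (\<lambda>S. \<Sum>j<n. if S = {j} then c j else 0)"

definition dZbar :: "nat \<Rightarrow> (nat \<Rightarrow> complex) \<Rightarrow> form" where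
  "dZbar n c = (\<lambda>S. \<Sum>j<n. if S = {n + j} then c j else 0)"

definition invertible_mat :: "nat \<Rightarrow> (nat \<Rightarrow> nat \<Rightarrow> complex) \<Rightarrow> bool" where
  "invertible_mat n A \<longleftrightarrow> (\<exists>B. \<forall>i<n. \<forall>j<n.
     (\<Sum>k<n. A i k * B k j) = (if i = j then 1 else 0))"

text \<open>In linear coordinates w_l = sum_j A l j z_j: the form sum_l b_l (i/2) dw_l /\ dwbar_l\<close>
definition diag_form :: "nat \<Rightarrow> (nat \<Rightarrow> nat \<Rightarrow> complex) \<Rightarrow> (nat \<Rightarrow> complex) \<Rightarrow> form" where
  "diag_form n A b = (\<lambda>S. \<Sum>l<n. b l * (\<i> / 2) *
      wedge (dZ n (A l)) (dZbar n (\<lambda>j. cnj (A l j))) S)"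

definition kahler :: "nat \<Rightarrow> form \<Rightarrow> bool" where
  "kahler n \<alpha> \<longleftrightarrow> (\<exists>A. invertible_mat n A \<and> \<alpha> = diag_form n A (\<lambda>_. 1))"

definition form_matrix2 :: "nat \<Rightarrow> (nat \<Rightarrow> nat \<Rightarrow> form) \<Rightarrow> bool" where
  "form_matrix2 n M \<longleftrightarrow> (\<forall>i<2. \<forall>j<2. M i j \<in> Vpq n 1 1 \<and> M i j = conj_form n (M j i))"

definition griffiths_positive :: "nat \<Rightarrow> (nat \<Rightarrow> nat \<Rightarrow> form) \<Rightarrow> bool" where
  "griffiths_positive n M \<longleftrightarrow> (\<forall>\<theta> :: nat \<Rightarrow> complex. (\<exists>i<2. \<theta> i \<noteq> 0) \<longrightarrow>
      kahler n (\<lambda>S. \<Sum>i<2. \<Sum>j<2. \<theta> i * M i j S * cnj (\<theta> j)))"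

definition diagonalized_entries :: "nat \<Rightarrow> (nat \<Rightarrow> nat \<Rightarrow> form) \<Rightarrow> bool" where
  "diagonalized_entries n M \<longleftrightarrow> (\<exists>A b. invertible_mat n A \<and>
      (\<forall>i<2. \<forall>j<2. M i j = diag_form n A (b i j)))"

definition det2 :: "(nat \<Rightarrow> nat \<Rightarrow> form) \<Rightarrow> form" where
  "det2 M = (\<lambda>S. wedge (M 0 0) (M 1 1) S - wedge (M 0 1) (M 1 0) S)"

definition lefschetz :: "nat \<Rightarrow> nat \<Rightarrow> form \<Rightarrow> nat \<Rightarrow> nat \<Rightarrow> bool" where
  "lefschetz n k \<Omega> p q \<longleftrightarrow> \<Omega> \<in> Vpq n k k \<and> p + q = n - k \<and>
     bij_betw (\<lambda>\<alpha>. wedge \<alpha> \<Omega>) (Vpq n p q) (Vpq n (n - q) (n - p))"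

end

theory Submission
  imports Defs "Jordan_Normal_Form.Determinant"
begin

definition ebas :: "nat set \<Rightarrow> form" where
  "ebas T = (\<lambda>S. if S = T then 1 else 0)"

definition invset :: "nat set \<Rightarrow> nat set \<Rightarrow> (nat \<times> nat) set" where
  "invset A B = {(a, b). a \<in> A \<and> b \<in> B \<and> b < a}"

lemma wsign_inv: "wsign A B = (-1) ^ card (invset A B)"
  by (simp add: wsign_def invset_def)

lemma invset_fin: "finite A \<Longrightarrow> finite B \<Longrightarrow> finite (invset A B)"
  by (rule finite_subset[of _ "A \<times> B"]) (auto simp: invset_def)

lemma wsign_empty1[simp]: "wsign {} B = 1"
  by (simp add: wsign_def)

lemma wsign_empty2[simp]: "wsign A {} = 1"
  by (simp add: wsign_def)

lemma wsign_Un1: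
  assumes "finite A" "finite A'" "finite B" "A \<inter> A' = {}"
  shows "wsign (A \<union> A') B = wsign A B * wsign A' B"
proof -
  have e: "invset (A \<union> A') B = invset A B \<union> invset A' B" by (auto simp: invset_def)
  have d: "invset A B \<inter> invset A' B = {}" using assms(4) by (auto simp: invset_def)
  show ?thesis unfolding wsign_inv e
    by (simp add: card_Un_disjoint[OF invset_fin invset_fin d] assms power_add)
qed

lemma wsign_Un2:
  assumes "finite A" "finite B" "finite B'" "B \<inter> B' = {}"
  shows "wsign A (B \<union> B') = wsign A B * wsign A B'"
proof -
  have e: "invset A (B \<union> B') = invset A B \<union> invset A B'" by (auto simp: invset_def)
  have d: "invset A B \<inter> invset A B' = {}" using assms(4) by (auto simp: invset_def)
  show ?thesis unfolding wsign_inv e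
    by (simp add: card_Un_disjoint[OF invset_fin invset_fin d] assms power_add)
qed

lemma wsign_sq: "wsign A B * wsign A B = 1"
  by (simp add: wsign_def power_mult_distrib[symmetric] power_mult[symmetric] mult.commute[of _ 2] power_mult)

lemma wedge_infinite: "infinite S \<Longrightarrow> wedge a b S = 0"
  by (simp add: wedge_def)

lemma wedge_assoc: "wedge (wedge a b) c = wedge a (wedge b c)"
proof
  fix S
  show "wedge (wedge a b) c S = wedge a (wedge b c) S"
  proof (cases "finite S")
    case False then show ?thesis by (simp add: wedge_def)
  next
    case fS: True
    let ?F = "\<lambda>R U. wsign R U * wsign R (S - R - U) * wsign U (S - R - U) * a R * b U * c (S - R - U)"
    have fP: "finite (Pow S)" using fS by simp
    have L1: "wedge (wedge a b) c S = (\<Sum>T\<in>Pow S. \<Sum>R\<in>Pow T. ?F R (T - R))"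
      unfolding wedge_def sum_distrib_left sum_distrib_right
    proof (intro sum.cong refl)
      fix T R assume T: "T \<in> Pow S" and R: "R \<in> Pow T"
      then have T: "T \<subseteq> S" and R: "R \<subseteq> T" by auto
      have fT: "finite T" "finite R" using T R fS by (auto dest: finite_subset)
      have "S - T = S - R - (T - R)" using R by blast
      moreover have "wsign T (S - T) = wsign R (S - T) * wsign (T - R) (S - T)"
      proof -
        have eq: "R \<union> (T - R) = T" using R by blast
        have "wsign (R \<union> (T - R)) (S - T) = wsign R (S - T) * wsign (T - R) (S - T)"
          by (rule wsign_Un1) (use fT fS in auto)
        then show ?thesis unfolding eq .
      qed
      ultimately show "wsign T (S - T) * (wsign R (T - R) * a R * b (T - R)) * c (S - T) = ?F R (T - R)"
        by (simp add: mult_ac)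
    qed
    have L: "wedge (wedge a b) c S = (\<Sum>(T, R)\<in>Sigma (Pow S) Pow. ?F R (T - R))"
      unfolding L1 by (rule sum.Sigma) (use fS finite_subset in auto)
    have R1: "wedge a (wedge b c) S = (\<Sum>R\<in>Pow S. \<Sum>U\<in>Pow (S - R). ?F R U)"
      unfolding wedge_def sum_distrib_left sum_distrib_right
    proof (intro sum.cong refl)
      fix R U assume R: "R \<in> Pow S" and U: "U \<in> Pow (S - R)"
      then have R: "R \<subseteq> S" and U: "U \<subseteq> S - R" by auto
      have fT: "finite R" "finite U" using U R fS by (auto dest: finite_subset)
      have "wsign R (S - R) = wsign R U * wsign R (S - R - U)"
      proof -
        have eq: "U \<union> (S - R - U) = S - R" using U by blast
        have "wsign R (U \<union> (S - R - U)) = wsign R U * wsign R (S - R - U)"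
          by (rule wsign_Un2) (use fT fS in auto)
        then show ?thesis unfolding eq .
      qed
      then show "wsign R (S - R) * a R * (wsign U (S - R - U) * b U * c (S - R - U)) = ?F R U"
        by (simp add: mult_ac)
    qed
    have R: "wedge a (wedge b c) S = (\<Sum>(R, U)\<in>Sigma (Pow S) (\<lambda>R. Pow (S - R)). ?F R U)"
      unfolding R1 by (rule sum.Sigma) (use fS in auto)
    have "(\<Sum>(T, R)\<in>Sigma (Pow S) Pow. ?F R (T - R)) = (\<Sum>(R, U)\<in>Sigma (Pow S) (\<lambda>R. Pow (S - R)). ?F R U)"
      by (rule sum.reindex_bij_witness[where i = "\<lambda>(R, U). (R \<union> U, R)" and j = "\<lambda>(T, R). (R, T - R)"])
         (auto simp: Diff_Un)
    then show ?thesis using L R by simp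
  qed
qed

definition finsupp :: "form \<Rightarrow> bool" where
  "finsupp a \<longleftrightarrow> (\<forall>S. infinite S \<longrightarrow> a S = 0)"

definition oneform :: "form \<Rightarrow> bool" where
  "oneform a \<longleftrightarrow> (\<forall>S. a S \<noteq> 0 \<longrightarrow> card S = 1)"

lemma finsupp_wedge[simp]: "finsupp (wedge a b)"
  by (simp add: finsupp_def wedge_def)

lemma finsupp_ebas[simp]: "finite T \<Longrightarrow> finsupp (ebas T)"
  by (auto simp: finsupp_def ebas_def)

lemma wedge_suml: "finite I \<Longrightarrow> wedge (\<lambda>S. \<Sum>i\<in>I. g i S) h S = (\<Sum>i\<in>I. wedge (g i) h S)"
  unfolding wedge_def by (simp add: sum_distrib_left sum_distrib_right sum.swap[of _ I])

lemma wedge_sumr: "finite I \<Longrightarrow> wedge h (\<lambda>S. \<Sum>i\<in>I. g i S) S = (\<Sum>i\<in>I. wedge h (g i) S)"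
  unfolding wedge_def by (simp add: sum_distrib_left sum_distrib_right sum.swap[of _ I])

lemma wedge_scalel: "wedge (\<lambda>S. c * g S) h S = c * wedge g h S"
  unfolding wedge_def by (simp add: sum_distrib_left mult_ac)

lemma wedge_scaler: "wedge h (\<lambda>S. c * g S) S = c * wedge h g S"
  unfolding wedge_def by (simp add: sum_distrib_left mult_ac)

lemma wedge_addl: "wedge (\<lambda>S. a S + b S) h S = wedge a h S + wedge b h S"
  unfolding wedge_def by (simp add: distrib_left distrib_right sum.distrib)

lemma wedge_addr: "wedge h (\<lambda>S. a S + b S) S = wedge h a S + wedge h b S"
  unfolding wedge_def by (simp add: distrib_left distrib_right sum.distrib)

lemma wedge_diffl: "wedge (\<lambda>S. a S - b S) h S = wedge a h S - wedge b h S"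
  unfolding wedge_def by (simp add: left_diff_distrib right_diff_distrib sum_subtractf)

lemma wedge_diffr: "wedge h (\<lambda>S. a S - b S) S = wedge h a S - wedge h b S"
  unfolding wedge_def by (simp add: left_diff_distrib right_diff_distrib sum_subtractf)

lemma wedge_negl: "wedge (\<lambda>S. - a S) h S = - wedge a h S"
  unfolding wedge_def by (simp add: sum_negf)

lemma wedge_zerol[simp]: "wedge (\<lambda>S. 0) h = (\<lambda>S. 0)"
  unfolding wedge_def by simp

lemma wedge_zeror[simp]: "wedge h (\<lambda>S. 0) = (\<lambda>S. 0)"
  unfolding wedge_def by simp

lemma wedge_onel: "finsupp a \<Longrightarrow> wedge (ebas {}) a = a"
proof
  fix S assume a: "finsupp a"
  show "wedge (ebas {}) a S = a S"
  proof (cases "finite S")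
    case True
    have "wedge (ebas {}) a S = (\<Sum>T\<in>Pow S. if T = {} then a S else 0)"
      unfolding wedge_def ebas_def by (intro sum.cong) auto
    also have "\<dots> = a S" using True by (simp add: sum.delta)
    finally show ?thesis .
  next
    case False then show ?thesis using a by (simp add: wedge_def finsupp_def)
  qed
qed

lemma wedge_oner: "finsupp a \<Longrightarrow> wedge a (ebas {}) = a"
proof
  fix S assume a: "finsupp a"
  show "wedge a (ebas {}) S = a S"
  proof (cases "finite S")
    case True
    have "wedge a (ebas {}) S = (\<Sum>T\<in>Pow S. if T = S then a S else 0)"
      unfolding wedge_def ebas_def by (intro sum.cong) auto
    also have "\<dots> = a S" using True by (simp add: sum.delta)
    finally show ?thesis .
  next
    case False then show ?thesis using a by (simp add: wedge_def finsupp_def)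
  qed
qed

lemma wedge_ebas:
  assumes "finite T" "finite R"
  shows "wedge (ebas T) (ebas R) S = (if T \<inter> R = {} \<and> S = T \<union> R then wsign T R else 0)"
proof (cases "finite S")
  case True
  have "wedge (ebas T) (ebas R) S = (\<Sum>X\<in>Pow S. if X = T then (if S - T = R then wsign T R else 0) else 0)"
    unfolding wedge_def ebas_def by (intro sum.cong) auto
  also have "\<dots> = (if T \<subseteq> S \<and> S - T = R then wsign T R else 0)"
    using True by (simp add: sum.delta)
  also have "\<dots> = (if T \<inter> R = {} \<and> S = T \<union> R then wsign T R else 0)"
    by (intro if_cong refl) auto
  finally show ?thesis .
next
  case False
  then have "\<not> (S = T \<union> R)" using assms by auto
  then show ?thesis using False by (simp add: wedge_def)
qed

lemma wsign_single_swap: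
  assumes "a \<noteq> b" shows "wsign {a} {b} = - wsign {b} {a}"
proof (cases "a < b")
  case True
  then have "invset {a} {b} = {}" "invset {b} {a} = {(b, a)}" by (auto simp: invset_def)
  then show ?thesis by (simp add: wsign_inv)
next
  case False
  then have "b < a" using assms by simp
  then have "invset {a} {b} = {(a, b)}" "invset {b} {a} = {}" by (auto simp: invset_def)
  then show ?thesis by (simp add: wsign_inv)
qed

lemma card2_pow:
  assumes "a \<noteq> b"
  shows "Pow {a, b} = {{}, {a}, {b}, {a, b}}"
  using assms by (auto simp: Pow_insert)

lemma wedge_oneform_pair:
  assumes f: "oneform f" and g: "oneform g" and ab: "a \<noteq> b"
  shows "wedge f g {a, b} = wsign {a} {b} * (f {a} * g {b} - f {b} * g {a})"
proof -
  have d: "{a, b} - {a} = {b}" "{a, b} - {b} = {a}" "{a,b} - {a,b} = {}" "{a,b} - {} = {a,b}"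
    using ab by auto
  have z: "f {} = 0" "g {} = 0" "f {a, b} = 0" "g {a,b} = 0"
    using f g ab unfolding oneform_def by (metis card.empty zero_neq_one, metis card.empty zero_neq_one,
      metis card_2_iff numeral_One numeral_eq_iff semiring_norm(85), metis card_2_iff numeral_One numeral_eq_iff semiring_norm(85))
  have "wedge f g {a, b} = (\<Sum>T\<in>{{}, {a}, {b}, {a, b}}. wsign T ({a, b} - T) * f T * g ({a, b} - T))"
    unfolding wedge_def card2_pow[OF ab] ..
  also have "\<dots> = wsign {a} {b} * f {a} * g {b} + wsign {b} {a} * f {b} * g {a}"
    using ab by (simp add: d z doubleton_eq_iff)
  finally show ?thesis using wsign_single_swap[OF ab] by (simp add: algebra_simps)
qed

lemma wedge_oneform_other:
  assumes f: "oneform f" and g: "oneform g" and S: "\<not> (\<exists>a b. a \<noteq> b \<and> S = {a, b})"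
  shows "wedge f g S = 0"
proof (cases "finite S")
  case True
  have "wsign T (S - T) * f T * g (S - T) = 0" if "T \<in> Pow S" for T
  proof (rule ccontr)
    assume "wsign T (S - T) * f T * g (S - T) \<noteq> 0"
    then have "card T = 1" "card (S - T) = 1" using f g unfolding oneform_def by auto
    then obtain x y where "T = {x}" "S - T = {y}" by (auto simp: card_1_singleton_iff)
    then have "S = {x, y}" "x \<noteq> y" using that by auto
    then show False using S by blast
  qed
  then show ?thesis unfolding wedge_def by (intro sum.neutral) blast
next
  case False then show ?thesis by (simp add: wedge_def)
qed

lemma wedge_oneform_anti:
  assumes f: "oneform f" and g: "oneform g"
  shows "wedge f g S = - wedge g f S"
proof (cases "\<exists>a b. a \<noteq> b \<and> S = {a, b}")
  case True
  then obtain a b where ab: "a \<noteq> b" "S = {a, b}" by blast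
  then show ?thesis unfolding ab(2) wedge_oneform_pair[OF f g ab(1)] wedge_oneform_pair[OF g f ab(1)]
    by (simp add: algebra_simps)
next
  case False
  then show ?thesis using wedge_oneform_other[OF f g] wedge_oneform_other[OF g f] by simp
qed

lemma wedge_oneform_self:
  assumes f: "oneform f"
  shows "wedge f f = (\<lambda>S. 0)"
proof
  fix S show "wedge f f S = 0" using wedge_oneform_anti[OF f f, of S] by simp
qed

definition Fprod :: "(nat \<Rightarrow> form) \<Rightarrow> nat set \<Rightarrow> form" where
  "Fprod f T = foldr (\<lambda>j acc. wedge (f j) acc) (sorted_list_of_set T) (ebas {})"

lemma Fprod_empty[simp]: "Fprod f {} = ebas {}"
  by (simp add: Fprod_def)

lemma Fprod_insert:
  assumes "finite T" "\<forall>t\<in>T. m < t"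
  shows "Fprod f (insert m T) = wedge (f m) (Fprod f T)"
proof -
  have "m \<notin> T" using assms by auto
  then have "sorted_list_of_set (insert m T) = insort m (sorted_list_of_set T)"
    using assms by (simp add: sorted_list_of_set_insert)
  also have "\<dots> = m # sorted_list_of_set T"
    using assms by (intro insort_is_Cons) (auto intro: less_imp_le)
  finally show ?thesis by (simp add: Fprod_def)
qed

lemma finsupp_Fprod: "finite T \<Longrightarrow> finsupp (Fprod f T)"
  by (induct T rule: finite_linorder_min_induct[consumes 1, case_names empty ins]) (auto simp: Fprod_insert)

lemma oneform_finsupp: "oneform a \<Longrightarrow> finsupp a"
  by (auto simp: oneform_def finsupp_def)

lemma Fprod_single: "oneform (f m) \<Longrightarrow> Fprod f {m} = f m"
  using Fprod_insert[of "{}" m f] by (simp add: wedge_oner oneform_finsupp)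

lemma card_less_insert_less:
  assumes "finite U" "u \<notin> U" "u < m"
  shows "card {x\<in>insert u U. x < m} = Suc (card {x\<in>U. x < m})"
proof -
  have "{x\<in>insert u U. x < m} = insert u {x\<in>U. x < m}" using assms by auto
  then show ?thesis using assms by simp
qed

lemma wedge_f_Fprod:
  assumes f: "\<forall>j. oneform (f j)" and U: "finite U"
  shows "wedge (f m) (Fprod f U) S = (if m \<in> U then 0 else (-1) ^ card {u\<in>U. u < m} * Fprod f (insert m U) S)"
  using U
proof (induct U arbitrary: S rule: finite_linorder_min_induct[consumes 1, case_names empty ins])
  case empty
  then show ?case using f by (simp add: wedge_oner oneform_finsupp Fprod_single)
next
  case (ins u U')
  have FU: "Fprod f (insert u U') = wedge (f u) (Fprod f U')" using ins by (simp add: Fprod_insert)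
  consider "m = u" | "m < u" | "u < m" by linarith
  then show ?case
  proof cases
    case 1
    have "wedge (f m) (Fprod f (insert u U')) = wedge (wedge (f m) (f u)) (Fprod f U')"
      by (simp add: FU wedge_assoc)
    also have "\<dots> = (\<lambda>S. 0)" using 1 f by (simp add: wedge_oneform_self)
    finally show ?thesis using 1 by simp
  next
    case 2
    then have e1: "m \<notin> insert u U'" and e2: "{x\<in>insert u U'. x < m} = {}" using ins.hyps by auto
    have "Fprod f (insert m (insert u U')) = wedge (f m) (Fprod f (insert u U'))"
      using ins.hyps \<open>m < u\<close> by (intro Fprod_insert) auto
    then show ?thesis unfolding e2 using e1 by simp
  next
    case 3
    have anti: "wedge (f m) (f u) = (\<lambda>S. - wedge (f u) (f m) S)"
      using f wedge_oneform_anti by blast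
    have "wedge (f m) (Fprod f (insert u U')) S = wedge (wedge (f m) (f u)) (Fprod f U') S"
      by (simp add: FU wedge_assoc)
    also have "\<dots> = - wedge (wedge (f u) (f m)) (Fprod f U') S"
      unfolding anti by (rule wedge_negl)
    also have "\<dots> = - wedge (f u) (wedge (f m) (Fprod f U')) S"
      by (simp add: wedge_assoc)
    finally have eq: "wedge (f m) (Fprod f (insert u U')) S = - wedge (f u) (wedge (f m) (Fprod f U')) S" .
    show ?thesis
    proof (cases "m \<in> U'")
      case True
      have "wedge (f m) (Fprod f U') = (\<lambda>S. 0)" using ins.hyps(3) True by auto
      then show ?thesis using eq True by simp
    next
      case False
      have IH: "wedge (f m) (Fprod f U') = (\<lambda>S. (-1) ^ card {u\<in>U'. u < m} * Fprod f (insert m U') S)"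
        using ins.hyps(3) False by auto
      have "wedge (f u) (Fprod f (insert m U')) = Fprod f (insert u (insert m U'))"
        using ins.hyps 3 by (intro Fprod_insert[symmetric]) auto
      moreover have "insert u (insert m U') = insert m (insert u U')" by auto
      moreover have "card {x\<in>insert u U'. x < m} = Suc (card {x\<in>U'. x < m})"
        using ins.hyps 3 by (intro card_less_insert_less) auto
      ultimately show ?thesis using eq False 3 unfolding IH wedge_scaler by simp
    qed
  qed
qed

lemma wsign_insert_min:
  assumes "finite T" "finite R" "\<forall>t\<in>T. m < t"
  shows "wsign (insert m T) R = (-1) ^ card {r\<in>R. r < m} * wsign T R"
proof -
  have "m \<notin> T" using assms by auto
  then have "wsign (insert m T) R = wsign {m} R * wsign T R"
    using wsign_Un1[of "{m}" T R] assms by simp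
  moreover have "invset {m} R = (\<lambda>r. (m, r)) ` {r\<in>R. r < m}" by (auto simp: invset_def)
  then have "card (invset {m} R) = card {r\<in>R. r < m}" by (simp add: card_image inj_on_def)
  ultimately show ?thesis by (simp add: wsign_inv)
qed

lemma Fprod_mult:
  assumes f: "\<forall>j. oneform (f j)" and T: "finite T" and R: "finite R"
  shows "wedge (Fprod f T) (Fprod f R) S = (if T \<inter> R = {} then wsign T R * Fprod f (T \<union> R) S else 0)"
  using T
proof (induct T arbitrary: S rule: finite_linorder_min_induct[consumes 1, case_names empty ins])
  case empty
  then show ?case using R by (simp add: wedge_onel finsupp_Fprod)
next
  case (ins m T')
  have IH: "wedge (Fprod f T') (Fprod f R) = (\<lambda>S. if T' \<inter> R = {} then wsign T' R * Fprod f (T' \<union> R) S else 0)"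
    using ins by auto
  have "wedge (Fprod f (insert m T')) (Fprod f R) S = wedge (f m) (wedge (Fprod f T') (Fprod f R)) S"
    using ins by (simp add: Fprod_insert wedge_assoc)
  also have "\<dots> = (if insert m T' \<inter> R = {} then wsign (insert m T') R * Fprod f (insert m T' \<union> R) S else 0)"
  proof (cases "T' \<inter> R = {}")
    case False
    then show ?thesis unfolding IH by auto
  next
    case True
    have c: "{u \<in> T' \<union> R. u < m} = {r\<in>R. r < m}" using ins.hyps by auto
    have "m \<notin> T'" using ins.hyps by auto
    have fTR: "finite (T' \<union> R)" using R ins.hyps by simp
    have "wedge (f m) (\<lambda>S. if T' \<inter> R = {} then wsign T' R * Fprod f (T' \<union> R) S else 0) S
        = wsign T' R * wedge (f m) (Fprod f (T' \<union> R)) S" using True by (simp add: wedge_scaler)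
    also have "\<dots> = wsign T' R * (if m \<in> T' \<union> R then 0 else (-1) ^ card {r\<in>R. r < m} * Fprod f (insert m (T' \<union> R)) S)"
      unfolding wedge_f_Fprod[OF f fTR] c ..
    also have "\<dots> = (if insert m T' \<inter> R = {} then wsign (insert m T') R * Fprod f (insert m T' \<union> R) S else 0)"
      using True \<open>m \<notin> T'\<close> wsign_insert_min[of T' R m] ins.hyps R by auto
    finally show ?thesis unfolding IH .
  qed
  finally show ?case .
qed

definition fin :: "nat \<Rightarrow> form \<Rightarrow> bool" where
  "fin N a \<longleftrightarrow> (\<forall>S. a S \<noteq> 0 \<longrightarrow> S \<subseteq> {..<N})"

definition phi :: "nat \<Rightarrow> (nat \<Rightarrow> form) \<Rightarrow> form \<Rightarrow> form" where
  "phi N f a = (\<lambda>S. \<Sum>T\<in>Pow {..<N}. a T * Fprod f T S)"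

lemma decomp: assumes "fin N a" shows "a S = (\<Sum>T\<in>Pow {..<N}. a T * ebas T S)"
proof -
  have "(\<Sum>T\<in>Pow {..<N}. a T * ebas T S) = (\<Sum>T\<in>Pow {..<N}. if S = T then a S else 0)"
    by (rule sum.cong) (auto simp: ebas_def)
  also have "\<dots> = (if S \<in> Pow {..<N} then a S else 0)" by (simp add: sum.delta')
  also have "\<dots> = a S" using assms unfolding fin_def by auto
  finally show ?thesis by simp
qed

lemma decomp_fun: "fin N a \<Longrightarrow> a = (\<lambda>S. \<Sum>T\<in>Pow {..<N}. a T * ebas T S)"
  using decomp by blast

lemma fin_finite: "fin N a \<Longrightarrow> a S \<noteq> 0 \<Longrightarrow> finite S"
  unfolding fin_def using finite_subset by blast

lemma wedge_decomp:
  assumes a: "fin N a" and b: "fin N b"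
  shows "wedge a b S = (\<Sum>T\<in>Pow {..<N}. \<Sum>R\<in>Pow {..<N}. a T * b R *
            (if T \<inter> R = {} \<and> S = T \<union> R then wsign T R else 0))"
proof -
  have "wedge a b S = wedge (\<lambda>S. \<Sum>T\<in>Pow {..<N}. a T * ebas T S) (\<lambda>S. \<Sum>R\<in>Pow {..<N}. b R * ebas R S) S"
    using decomp_fun[OF a] decomp_fun[OF b] by metis
  also have "\<dots> = (\<Sum>T\<in>Pow {..<N}. \<Sum>R\<in>Pow {..<N}. a T * b R * wedge (ebas T) (ebas R) S)"
    by (simp add: wedge_suml wedge_sumr wedge_scalel wedge_scaler sum_distrib_left mult_ac)
  also have "\<dots> = (\<Sum>T\<in>Pow {..<N}. \<Sum>R\<in>Pow {..<N}. a T * b R *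
            (if T \<inter> R = {} \<and> S = T \<union> R then wsign T R else 0))"
    by (intro sum.cong refl, subst wedge_ebas) (auto intro: finite_subset)
  finally show ?thesis .
qed

lemma fin_wedge: assumes a: "fin N a" and b: "fin N b" shows "fin N (wedge a b)"
  unfolding fin_def
proof (intro allI impI)
  fix S assume "wedge a b S \<noteq> 0"
  then obtain T where T: "T \<in> Pow S" "wsign T (S - T) * a T * b (S - T) \<noteq> 0"
    unfolding wedge_def by (meson sum.not_neutral_contains_not_neutral)
  then have "T \<subseteq> {..<N}" "S - T \<subseteq> {..<N}" using a b unfolding fin_def by auto
  then show "S \<subseteq> {..<N}" using T(1) by blast
qed

lemma fin_ebas: "T \<subseteq> {..<N} \<Longrightarrow> fin N (ebas T)"
  by (auto simp: fin_def ebas_def)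

lemma fin_Fprod:
  assumes "\<forall>j. fin N (f j)" "finite T" shows "fin N (Fprod f T)"
  using assms(2)
  by (induct T rule: finite_linorder_min_induct[consumes 1, case_names empty ins])
     (auto simp: Fprod_insert fin_ebas fin_wedge assms(1))

lemma phi_ebas: "T \<subseteq> {..<N} \<Longrightarrow> phi N f (ebas T) = Fprod f T"
proof
  fix S assume T: "T \<subseteq> {..<N}"
  have "phi N f (ebas T) S = (\<Sum>X\<in>Pow {..<N}. if T = X then Fprod f T S else 0)"
    unfolding phi_def by (rule sum.cong) (auto simp: ebas_def)
  also have "\<dots> = Fprod f T S" using T by (simp add: sum.delta')
  finally show "phi N f (ebas T) S = Fprod f T S" .
qed

lemma phi_lin: "finite I \<Longrightarrow> phi N f (\<lambda>S. \<Sum>i\<in>I. c i * g i S) = (\<lambda>S. \<Sum>i\<in>I. c i * phi N f (g i) S)"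
  unfolding phi_def
  apply (rule ext)
  apply (simp add: sum_distrib_left sum_distrib_right mult_ac)
  apply (rule sum.swap)
  done

lemma phi_scale: "phi N f (\<lambda>S. c * g S) = (\<lambda>S. c * phi N f g S)"
  unfolding phi_def by (auto simp: sum_distrib_left mult_ac)

lemma phi_diff: "phi N f (\<lambda>S. a S - b S) = (\<lambda>S. phi N f a S - phi N f b S)"
  unfolding phi_def by (auto simp: left_diff_distrib sum_subtractf)

lemma phi_add: "phi N f (\<lambda>S. a S + b S) = (\<lambda>S. phi N f a S + phi N f b S)"
  unfolding phi_def by (auto simp: distrib_right sum.distrib)

lemma phi_mult:
  assumes f: "\<forall>j. oneform (f j)" and a: "fin N a" and b: "fin N b"
  shows "phi N f (wedge a b) = wedge (phi N f a) (phi N f b)"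
proof
  fix S
  have "phi N f (wedge a b) S = (\<Sum>U\<in>Pow {..<N}. (\<Sum>T\<in>Pow {..<N}. \<Sum>R\<in>Pow {..<N}. a T * b R *
            (if T \<inter> R = {} \<and> U = T \<union> R then wsign T R else 0)) * Fprod f U S)"
    unfolding phi_def wedge_decomp[OF a b] ..
  also have "\<dots> = (\<Sum>U\<in>Pow {..<N}. \<Sum>T\<in>Pow {..<N}. \<Sum>R\<in>Pow {..<N}. a T * b R *
            ((if T \<inter> R = {} \<and> U = T \<union> R then wsign T R else 0) * Fprod f U S))"
    by (simp add: sum_distrib_right mult.assoc)
  also have "\<dots> = (\<Sum>T\<in>Pow {..<N}. \<Sum>U\<in>Pow {..<N}. \<Sum>R\<in>Pow {..<N}. a T * b R *
            ((if T \<inter> R = {} \<and> U = T \<union> R then wsign T R else 0) * Fprod f U S))"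
    by (rule sum.swap)
  also have "\<dots> = (\<Sum>T\<in>Pow {..<N}. \<Sum>R\<in>Pow {..<N}. \<Sum>U\<in>Pow {..<N}. a T * b R *
            ((if T \<inter> R = {} \<and> U = T \<union> R then wsign T R else 0) * Fprod f U S))"
    by (rule sum.cong[OF refl], rule sum.swap)
  also have "\<dots> = (\<Sum>T\<in>Pow {..<N}. \<Sum>R\<in>Pow {..<N}. a T * b R * (\<Sum>U\<in>Pow {..<N}.
            (if T \<inter> R = {} \<and> U = T \<union> R then wsign T R else 0) * Fprod f U S))"
    by (simp add: sum_distrib_left)
  also have "\<dots> = (\<Sum>T\<in>Pow {..<N}. \<Sum>R\<in>Pow {..<N}. a T * b R *
            (if T \<inter> R = {} then wsign T R * Fprod f (T \<union> R) S else 0))"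
  proof (intro sum.cong refl)
    fix T R assume "T \<in> Pow {..<N}" "R \<in> Pow {..<N}"
    then have TR: "T \<union> R \<in> Pow {..<N}" by auto
    have "(\<Sum>U\<in>Pow {..<N}. (if T \<inter> R = {} \<and> U = T \<union> R then wsign T R else 0) * Fprod f U S)
       = (\<Sum>U\<in>Pow {..<N}. if U = T \<union> R then (if T \<inter> R = {} then wsign T R * Fprod f (T \<union> R) S else 0) else 0)"
      by (rule sum.cong) auto
    also have "\<dots> = (if T \<inter> R = {} then wsign T R * Fprod f (T \<union> R) S else 0)"
      using TR sum.delta[of "Pow {..<N}" "T \<union> R" "\<lambda>_. if T \<inter> R = {} then wsign T R * Fprod f (T \<union> R) S else 0"] by simp
    finally show "a T * b R * (\<Sum>U\<in>Pow {..<N}. (if T \<inter> R = {} \<and> U = T \<union> R then wsign T R else 0) * Fprod f U S)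
      = a T * b R * (if T \<inter> R = {} then wsign T R * Fprod f (T \<union> R) S else 0)" by simp
  qed
  also have "\<dots> = (\<Sum>T\<in>Pow {..<N}. \<Sum>R\<in>Pow {..<N}. a T * b R * wedge (Fprod f T) (Fprod f R) S)"
    by (intro sum.cong refl, subst Fprod_mult[OF f]) (auto intro: finite_subset)
  also have "\<dots> = wedge (phi N f a) (phi N f b) S"
    unfolding phi_def
    by (simp add: wedge_suml wedge_sumr wedge_scalel wedge_scaler sum_distrib_left mult_ac)
  finally show "phi N f (wedge a b) S = wedge (phi N f a) (phi N f b) S" .
qed

lemma Fprod_cong: "finite T \<Longrightarrow> (\<forall>j\<in>T. f j = g j) \<longrightarrow> Fprod f T = Fprod g T"
  by (induct T rule: finite_linorder_min_induct[consumes 1, case_names empty ins])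
     (auto simp: Fprod_insert)

lemma Fprod_ebas: "finite T \<Longrightarrow> Fprod (\<lambda>j. ebas {j}) T = ebas T"
proof (induct T rule: finite_linorder_min_induct[consumes 1, case_names empty ins])
  case empty then show ?case by simp
next
  case (ins m T)
  have "invset {m} T = {}" using ins.hyps by (auto simp: invset_def)
  then have "wsign {m} T = 1" by (simp add: wsign_inv)
  have d: "{m} \<inter> T = {}" using ins.hyps by auto
  have "Fprod (\<lambda>j. ebas {j}) (insert m T) = wedge (ebas {m}) (ebas T)"
    using ins by (simp add: Fprod_insert)
  also have "\<dots> = ebas (insert m T)"
  proof
    fix S show "wedge (ebas {m}) (ebas T) S = ebas (insert m T) S"
      unfolding wedge_ebas[OF finite.insertI[OF finite.emptyI] ins.hyps(1)] using d \<open>wsign {m} T = 1\<close>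
      by (simp add: ebas_def)
  qed
  finally show ?case .
qed

lemma phi_Fprod:
  assumes f: "\<forall>j. fin N (f j)" and g: "\<forall>j. oneform (g j)" and T: "finite T"
  shows "phi N g (Fprod f T) = Fprod (\<lambda>j. phi N g (f j)) T"
  using T
proof (induct T rule: finite_linorder_min_induct[consumes 1, case_names empty ins])
  case empty then show ?case by (simp add: phi_ebas)
next
  case (ins m T)
  have "phi N g (Fprod f (insert m T)) = phi N g (wedge (f m) (Fprod f T))"
    using ins.hyps by (simp add: Fprod_insert)
  also have "\<dots> = wedge (phi N g (f m)) (phi N g (Fprod f T))"
    by (rule phi_mult[OF g]) (use f fin_Fprod ins.hyps in auto)
  also have "\<dots> = Fprod (\<lambda>j. phi N g (f j)) (insert m T)"
    using ins.hyps by (simp add: Fprod_insert)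
  finally show ?case .
qed

lemma phi_comp:
  assumes f: "\<forall>j. fin N (f j)" and g: "\<forall>j. oneform (g j)"
    and inv: "\<forall>j<N. phi N g (f j) = ebas {j}" and a: "fin N a"
  shows "phi N g (phi N f a) = a"
proof
  fix S
  have "phi N g (phi N f a) S = (\<Sum>T\<in>Pow {..<N}. a T * phi N g (Fprod f T) S)"
    unfolding phi_def[of N f] phi_lin[OF finite_Pow_iff[THEN iffD2, OF finite_lessThan]] ..
  also have "\<dots> = (\<Sum>T\<in>Pow {..<N}. a T * ebas T S)"
  proof (intro sum.cong refl)
    fix T assume T: "T \<in> Pow {..<N}"
    then have fT: "finite T" using finite_subset[of T "{..<N}"] by auto
    have "phi N g (Fprod f T) = Fprod (\<lambda>j. phi N g (f j)) T" by (rule phi_Fprod[OF f g fT])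
    also have "\<dots> = Fprod (\<lambda>j. ebas {j}) T" proof -
      have "\<forall>j\<in>T. phi N g (f j) = ebas {j}" using T inv by blast
      then show ?thesis using Fprod_cong[OF fT, of "\<lambda>j. phi N g (f j)" "\<lambda>j. ebas {j}"] by simp
    qed
    also have "\<dots> = ebas T" by (rule Fprod_ebas[OF fT])
    finally show "a T * phi N g (Fprod f T) S = a T * ebas T S" by simp
  qed
  also have "\<dots> = a S" by (rule decomp[OF a, symmetric])
  finally show "phi N g (phi N f a) S = a S" .
qed

lemma Vpq_def2: "a \<in> Vpq n p q \<longleftrightarrow> (\<forall>S. a S \<noteq> 0 \<longrightarrow> S \<subseteq> {..<2*n} \<and> card (S \<inter> {..<n}) = p \<and> card (S \<inter> {n..<2*n}) = q)"
  by (simp add: Vpq_def)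

lemma Vpq_fin: "a \<in> Vpq n p q \<Longrightarrow> fin (2*n) a"
  by (auto simp: Vpq_def fin_def)

lemma Vpq_zero[simp]: "(\<lambda>S. 0) \<in> Vpq n p q"
  by (simp add: Vpq_def)

lemma Vpq_add: assumes a: "a \<in> Vpq n p q" and b: "b \<in> Vpq n p q" shows "(\<lambda>S. a S + b S) \<in> Vpq n p q"
  unfolding Vpq_def2
proof (intro allI impI)
  fix S assume "a S + b S \<noteq> 0"
  then show "S \<subseteq> {..<2 * n} \<and> card (S \<inter> {..<n}) = p \<and> card (S \<inter> {n..<2 * n}) = q"
    using a b unfolding Vpq_def2 by (cases "a S = 0") auto
qed

lemma Vpq_diff: assumes a: "a \<in> Vpq n p q" and b: "b \<in> Vpq n p q" shows "(\<lambda>S. a S - b S) \<in> Vpq n p q"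
  unfolding Vpq_def2
proof (intro allI impI)
  fix S assume "a S - b S \<noteq> 0"
  then show "S \<subseteq> {..<2 * n} \<and> card (S \<inter> {..<n}) = p \<and> card (S \<inter> {n..<2 * n}) = q"
    using a b unfolding Vpq_def2 by (cases "a S = 0") auto
qed

lemma Vpq_scale: "a \<in> Vpq n p q \<Longrightarrow> (\<lambda>S. c * a S) \<in> Vpq n p q"
  unfolding Vpq_def by auto

lemma Vpq_sum: "finite I \<Longrightarrow> (\<forall>i\<in>I. g i \<in> Vpq n p q) \<Longrightarrow> (\<lambda>S. \<Sum>i\<in>I. g i S) \<in> Vpq n p q"
proof (induct I rule: finite_induct)
  case empty then show ?case by simp
next
  case (insert x F)
  then show ?case using Vpq_add[of "g x" n p q "\<lambda>S. \<Sum>i\<in>F. g i S"] by simp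
qed

lemma wedge_Vpq:
  assumes a: "a \<in> Vpq n p q" and b: "b \<in> Vpq n p' q'"
  shows "wedge a b \<in> Vpq n (p + p') (q + q')"
  unfolding Vpq_def2
proof (intro allI impI)
  fix S assume "wedge a b S \<noteq> 0"
  then obtain T where T: "T \<in> Pow S" "wsign T (S - T) * a T * b (S - T) \<noteq> 0"
    unfolding wedge_def by (meson sum.not_neutral_contains_not_neutral)
  then have A: "T \<subseteq> {..<2*n}" "card (T \<inter> {..<n}) = p" "card (T \<inter> {n..<2*n}) = q"
    and B: "S - T \<subseteq> {..<2*n}" "card ((S - T) \<inter> {..<n}) = p'" "card ((S - T) \<inter> {n..<2*n}) = q'"
    using a b unfolding Vpq_def2 by auto
  have S: "S = T \<union> (S - T)" using T(1) by auto
  have fT: "finite T" "finite (S - T)" using finite_subset[OF A(1)] finite_subset[OF B(1)] by auto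
  have "card (S \<inter> {..<n}) = card (T \<inter> {..<n} \<union> (S - T) \<inter> {..<n})"
    by (metis S Int_Un_distrib2)
  also have "\<dots> = p + p'" using A B fT by (subst card_Un_disjoint) auto
  finally have 1: "card (S \<inter> {..<n}) = p + p'" .
  have "card (S \<inter> {n..<2*n}) = card (T \<inter> {n..<2*n} \<union> (S - T) \<inter> {n..<2*n})"
    by (metis S Int_Un_distrib2)
  also have "\<dots> = q + q'" using A B fT by (subst card_Un_disjoint) auto
  finally have 2: "card (S \<inter> {n..<2*n}) = q + q'" .
  show "S \<subseteq> {..<2*n} \<and> card (S \<inter> {..<n}) = p + p' \<and> card (S \<inter> {n..<2*n}) = q + q'"
    using 1 2 A(1) B(1) S by blast
qed

lemma ebas_empty_Vpq: "ebas {} \<in> Vpq n 0 0"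
  by (auto simp: Vpq_def ebas_def)

lemma Fprod_Vpq:
  assumes f1: "\<forall>j<n. f j \<in> Vpq n 1 0" and f2: "\<forall>j. n \<le> j \<and> j < 2*n \<longrightarrow> f j \<in> Vpq n 0 1"
    and T: "T \<subseteq> {..<2*n}"
  shows "Fprod f T \<in> Vpq n (card (T \<inter> {..<n})) (card (T \<inter> {n..<2*n}))"
proof -
  have fT: "finite T" using finite_subset[OF T] by auto
  show ?thesis using fT T
  proof (induct T rule: finite_linorder_min_induct[consumes 1, case_names empty ins])
    case empty then show ?case by (simp add: ebas_empty_Vpq)
  next
    case (ins m T)
    have mT: "m \<notin> T" using ins.hyps by auto
    have IH: "Fprod f T \<in> Vpq n (card (T \<inter> {..<n})) (card (T \<inter> {n..<2*n}))" using ins by auto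
    have F: "Fprod f (insert m T) = wedge (f m) (Fprod f T)" using ins.hyps by (simp add: Fprod_insert)
    have fTn: "finite (T \<inter> {..<n})" "finite (T \<inter> {n..<2*n})" using ins.hyps by auto
    show ?case
    proof (cases "m < n")
      case True
      have "insert m T \<inter> {..<n} = insert m (T \<inter> {..<n})" "insert m T \<inter> {n..<2*n} = T \<inter> {n..<2*n}"
        using True by auto
      then show ?thesis unfolding F using wedge_Vpq[OF _ IH, of "f m" 1 0] f1 True fTn mT by simp
    next
      case False
      have "m < 2*n" using ins.prems by auto
      then have "insert m T \<inter> {..<n} = T \<inter> {..<n}" "insert m T \<inter> {n..<2*n} = insert m (T \<inter> {n..<2*n})"
        using False by auto
      then show ?thesis unfolding F using wedge_Vpq[OF _ IH, of "f m" 0 1] f2 False fTn mT \<open>m < 2*n\<close> by simp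
    qed
  qed
qed

lemma phi_Vpq:
  assumes f1: "\<forall>j<n. f j \<in> Vpq n 1 0" and f2: "\<forall>j. n \<le> j \<and> j < 2*n \<longrightarrow> f j \<in> Vpq n 0 1"
    and a: "a \<in> Vpq n p q"
  shows "phi (2*n) f a \<in> Vpq n p q"
proof -
  have "\<forall>T\<in>Pow {..<2*n}. (\<lambda>S. a T * Fprod f T S) \<in> Vpq n p q"
  proof
    fix T assume "T \<in> Pow {..<2*n}"
    then have T: "T \<subseteq> {..<2*n}" by simp
    show "(\<lambda>S. a T * Fprod f T S) \<in> Vpq n p q"
    proof (cases "a T = 0")
      case True then show ?thesis by simp
    next
      case False
      then have "card (T \<inter> {..<n}) = p" "card (T \<inter> {n..<2*n}) = q" using a by (auto simp: Vpq_def)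
      then show ?thesis using Fprod_Vpq[OF f1 f2 T] by (simp add: Vpq_scale)
    qed
  qed
  then show ?thesis unfolding phi_def by (intro Vpq_sum) auto
qed

definition mm :: "(nat \<Rightarrow> nat \<Rightarrow> complex) \<Rightarrow> (nat \<Rightarrow> nat \<Rightarrow> complex) \<Rightarrow> nat \<Rightarrow> nat \<Rightarrow> complex" where
  "mm A B i k = (\<Sum>l<4. A i l * B l k)"

definition fA :: "(nat \<Rightarrow> nat \<Rightarrow> complex) \<Rightarrow> nat \<Rightarrow> form" where
  "fA A j = (if j < 4 then dZ 4 (A j) else if j < 8 then dZbar 4 (\<lambda>k. cnj (A (j - 4) k)) else (\<lambda>S. 0))"

lemma dZ_ebas: "dZ 4 c = (\<lambda>S. \<Sum>k<4. c k * ebas {k} S)"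
  unfolding dZ_def ebas_def by (intro ext sum.cong) auto

lemma dZbar_ebas: "dZbar 4 c = (\<lambda>S. \<Sum>k<4. c k * ebas {4 + k} S)"
  unfolding dZbar_def ebas_def by (intro ext sum.cong) auto

lemma oneform_dZ: "oneform (dZ n c)"
  unfolding oneform_def dZ_def
proof (intro allI impI)
  fix S assume "(\<Sum>j<n. if S = {j} then c j else 0) \<noteq> 0"
  then obtain j where "j \<in> {..<n}" "(if S = {j} then c j else 0) \<noteq> 0" by (rule sum.not_neutral_contains_not_neutral)
  then have "S = {j}" by (cases "S = {j}") auto
  then show "card S = 1" by simp
qed

lemma oneform_dZbar: "oneform (dZbar n c)"
  unfolding oneform_def dZbar_def
proof (intro allI impI)
  fix S assume "(\<Sum>j<n. if S = {n + j} then c j else 0) \<noteq> 0"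
  then obtain j where "j \<in> {..<n}" "(if S = {n + j} then c j else 0) \<noteq> 0" by (rule sum.not_neutral_contains_not_neutral)
  then have "S = {n + j}" by (cases "S = {n + j}") auto
  then show "card S = 1" by simp
qed

lemma oneform_zero: "oneform (\<lambda>S. 0)"
  by (simp add: oneform_def)

lemma oneform_fA: "oneform (fA A j)"
  unfolding fA_def by (simp add: oneform_dZ oneform_dZbar oneform_zero)

lemma ebas_single_V10: "k < 4 \<Longrightarrow> ebas {k} \<in> Vpq 4 1 0"
  by (auto simp: Vpq_def ebas_def)

lemma ebas_single_V01: "k < 4 \<Longrightarrow> ebas {4 + k} \<in> Vpq 4 0 1"
proof -
  assume k: "k < 4"
  then have "{4 + k} \<inter> {..<4} = {}" "{4 + k} \<inter> {4..<2*4} = {4 + k}" by auto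
  then show ?thesis using k by (auto simp: Vpq_def ebas_def)
qed

lemma dZ_V10: "dZ 4 c \<in> Vpq 4 1 0"
  unfolding dZ_ebas by (intro Vpq_sum ballI Vpq_scale ebas_single_V10) auto

lemma dZbar_V01: "dZbar 4 c \<in> Vpq 4 0 1"
  unfolding dZbar_ebas by (intro Vpq_sum ballI Vpq_scale ebas_single_V01) auto

lemma fA_V10: "\<forall>j<4. fA A j \<in> Vpq 4 1 0"
proof (intro allI impI)
  fix j :: nat assume "j < 4"
  then have "fA A j = dZ 4 (A j)" by (simp add: fA_def)
  then show "fA A j \<in> Vpq 4 1 0" using dZ_V10 by metis
qed

lemma fA_V01: "\<forall>j. 4 \<le> j \<and> j < 2*4 \<longrightarrow> fA A j \<in> Vpq 4 0 1"
proof (intro allI impI)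
  fix j :: nat assume "4 \<le> j \<and> j < 2*4"
  then have "fA A j = dZbar 4 (\<lambda>k. cnj (A (j - 4) k))" by (simp add: fA_def)
  then show "fA A j \<in> Vpq 4 0 1" using dZbar_V01 by metis
qed

lemma fin_fA: "fin 8 (fA A j)"
proof (cases "j < 8")
  case True
  have "fA A j \<in> Vpq 4 1 0 \<or> fA A j \<in> Vpq 4 0 1"
    using True fA_V10[of A] fA_V01[of A] by (cases "j < 4") auto
  then have "fin (2*4) (fA A j)" using Vpq_fin by blast
  then show ?thesis by simp
next
  case False then show ?thesis by (simp add: fA_def fin_def)
qed

lemma Fprod_fA_single: "Fprod (fA B) {k} = fA B k"
  by (rule Fprod_single[OF oneform_fA])

lemma phi_fA_lo:
  assumes j: "j < 4"
  shows "phi 8 (fA B) (fA A j) = fA (mm A B) j"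
proof -
  have "phi 8 (fA B) (fA A j) = phi 8 (fA B) (\<lambda>S. \<Sum>k<4. A j k * ebas {k} S)"
    using j by (simp add: fA_def dZ_ebas)
  also have "\<dots> = (\<lambda>S. \<Sum>k<4. A j k * phi 8 (fA B) (ebas {k}) S)"
    by (rule phi_lin) simp
  also have "\<dots> = (\<lambda>S. \<Sum>k<4. A j k * (\<Sum>m<4. B k m * ebas {m} S))"
  proof (intro ext sum.cong refl)
    fix S k assume "k \<in> {..<4::nat}"
    then have "phi 8 (fA B) (ebas {k}) = dZ 4 (B k)"
      by (simp add: phi_ebas Fprod_fA_single fA_def)
    then show "A j k * phi 8 (fA B) (ebas {k}) S = A j k * (\<Sum>m<4. B k m * ebas {m} S)"
      by (simp add: dZ_ebas)
  qed
  also have "\<dots> = (\<lambda>S. \<Sum>m<4. mm A B j m * ebas {m} S)"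
    unfolding mm_def
    by (intro ext) (simp only: sum_distrib_left sum_distrib_right mult.assoc, rule sum.swap)
  also have "\<dots> = fA (mm A B) j" using j by (simp add: fA_def dZ_ebas)
  finally show ?thesis .
qed

lemma phi_fA_hi:
  assumes j: "4 \<le> j" "j < 8"
  shows "phi 8 (fA B) (fA A j) = fA (mm A B) j"
proof -
  have "phi 8 (fA B) (fA A j) = phi 8 (fA B) (\<lambda>S. \<Sum>k<4. cnj (A (j - 4) k) * ebas {4 + k} S)"
    using j by (simp add: fA_def dZbar_ebas)
  also have "\<dots> = (\<lambda>S. \<Sum>k<4. cnj (A (j - 4) k) * phi 8 (fA B) (ebas {4 + k}) S)"
    by (rule phi_lin) simp
  also have "\<dots> = (\<lambda>S. \<Sum>k<4. cnj (A (j - 4) k) * (\<Sum>m<4. cnj (B k m) * ebas {4 + m} S))"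
  proof (intro ext sum.cong refl)
    fix S k assume "k \<in> {..<4::nat}"
    then have "phi 8 (fA B) (ebas {4 + k}) = dZbar 4 (\<lambda>m. cnj (B k m))"
      by (simp add: phi_ebas Fprod_fA_single fA_def)
    then show "cnj (A (j - 4) k) * phi 8 (fA B) (ebas {4 + k}) S = cnj (A (j - 4) k) * (\<Sum>m<4. cnj (B k m) * ebas {4 + m} S)"
      by (simp add: dZbar_ebas)
  qed
  also have "\<dots> = (\<lambda>S. \<Sum>m<4. (\<Sum>k<4. cnj (A (j - 4) k) * cnj (B k m)) * ebas {4 + m} S)"
    by (intro ext) (simp only: sum_distrib_left sum_distrib_right mult.assoc, rule sum.swap)
  also have "\<dots> = fA (mm A B) j" using j by (simp add: fA_def dZbar_ebas mm_def)
  finally show ?thesis .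
qed

lemma phi_fA: "j < 8 \<Longrightarrow> phi 8 (fA B) (fA A j) = fA (mm A B) j"
  using phi_fA_lo[of j B A] phi_fA_hi[of j B A] by (cases "j < 4") auto

definition is_inv :: "(nat \<Rightarrow> nat \<Rightarrow> complex) \<Rightarrow> (nat \<Rightarrow> nat \<Rightarrow> complex) \<Rightarrow> bool" where
  "is_inv A B \<longleftrightarrow> (\<forall>i<4. \<forall>k<4. mm A B i k = (if i = k then 1 else 0))"

lemma sum_delta_mult: fixes f :: "nat \<Rightarrow> complex" shows "finite A \<Longrightarrow> j \<in> A \<Longrightarrow> (\<Sum>k\<in>A. (if j = k then 1 else 0) * f k) = f j"
proof -
  assume "finite A" "j \<in> A"
  have "(\<Sum>k\<in>A. (if j = k then 1 else 0) * f k) = (\<Sum>k\<in>A. if j = k then f k else 0)"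
    by (rule sum.cong) auto
  then show ?thesis using \<open>finite A\<close> \<open>j \<in> A\<close> by (simp add: sum.delta)
qed

lemma fA_id:
  assumes AB: "is_inv A B" and j: "j < 8"
  shows "fA (mm A B) j = ebas {j}"
proof (cases "j < 4")
  case True
  have "fA (mm A B) j = (\<lambda>S. \<Sum>k<4. (if j = k then 1 else 0) * ebas {k} S)"
    using True AB by (simp add: fA_def dZ_ebas is_inv_def)
  also have "\<dots> = ebas {j}" using True by (intro ext) (simp add: sum_delta_mult)
  finally show ?thesis .
next
  case False
  have c: "\<forall>k<4. cnj (mm A B (j - 4) k) = (if j - 4 = k then 1 else 0)"
    using AB j False by (auto simp: is_inv_def)
  have "fA (mm A B) j = (\<lambda>S. \<Sum>k<4. cnj (mm A B (j - 4) k) * ebas {4 + k} S)"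
    using False j by (simp add: fA_def dZbar_ebas)
  also have "\<dots> = (\<lambda>S. \<Sum>k<4. (if j - 4 = k then 1 else 0) * ebas {4 + k} S)"
    using c by (intro ext sum.cong) auto
  finally have "fA (mm A B) j = (\<lambda>S. \<Sum>k<4. (if j - 4 = k then 1 else 0) * ebas {4 + k} S)" .
  also have "\<dots> = ebas {4 + (j - 4)}" using False j by (intro ext) (simp add: sum_delta_mult)
  finally show ?thesis using False by simp
qed

lemma phi_inv:
  assumes AB: "is_inv A B" and a: "fin 8 a"
  shows "phi 8 (fA B) (phi 8 (fA A) a) = a"
  by (rule phi_comp[OF _ _ _ a]) (auto simp: fin_fA oneform_fA phi_fA fA_id[OF AB])

definition Dstd :: "(nat \<Rightarrow> complex) \<Rightarrow> form" where
  "Dstd b = (\<lambda>S. \<Sum>l<4. (b l * (\<i> / 2)) * wedge (ebas {l}) (ebas {4 + l}) S)"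

lemma diag_fA: "diag_form 4 K b = (\<lambda>S. \<Sum>l<4. (b l * (\<i> / 2)) * wedge (fA K l) (fA K (4 + l)) S)"
  unfolding diag_form_def by (intro ext sum.cong refl) (simp add: fA_def)

lemma diag_phi: "diag_form 4 A b = phi 8 (fA A) (Dstd b)"
proof -
  have "phi 8 (fA A) (Dstd b) = (\<lambda>S. \<Sum>l<4. (b l * (\<i> / 2)) * phi 8 (fA A) (wedge (ebas {l}) (ebas {4 + l})) S)"
    unfolding Dstd_def by (rule phi_lin) simp
  also have "\<dots> = (\<lambda>S. \<Sum>l<4. (b l * (\<i> / 2)) * wedge (fA A l) (fA A (4 + l)) S)"
  proof (intro ext sum.cong refl)
    fix S l assume l: "l \<in> {..<4::nat}"
    have "phi 8 (fA A) (wedge (ebas {l}) (ebas {4 + l})) = wedge (phi 8 (fA A) (ebas {l})) (phi 8 (fA A) (ebas {4 + l}))"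
      by (rule phi_mult) (use l in \<open>auto simp: oneform_fA intro!: fin_ebas\<close>)
    also have "\<dots> = wedge (fA A l) (fA A (4 + l))"
      using l by (simp add: phi_ebas Fprod_fA_single)
    finally show "b l * (\<i> / 2) * phi 8 (fA A) (wedge (ebas {l}) (ebas {4 + l})) S = b l * (\<i> / 2) * wedge (fA A l) (fA A (4 + l)) S"
      by simp
  qed
  finally show ?thesis by (simp add: diag_fA)
qed

lemma phi_diag:
  "phi 8 (fA B) (diag_form 4 K b) = diag_form 4 (mm K B) b"
proof -
  have "phi 8 (fA B) (diag_form 4 K b) = (\<lambda>S. \<Sum>l<4. (b l * (\<i> / 2)) * phi 8 (fA B) (wedge (fA K l) (fA K (4 + l))) S)"
    unfolding diag_fA by (rule phi_lin) simp
  also have "\<dots> = (\<lambda>S. \<Sum>l<4. (b l * (\<i> / 2)) * wedge (fA (mm K B) l) (fA (mm K B) (4 + l)) S)"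
  proof (intro ext sum.cong refl)
    fix S l assume l: "l \<in> {..<4::nat}"
    have "phi 8 (fA B) (wedge (fA K l) (fA K (4 + l))) = wedge (phi 8 (fA B) (fA K l)) (phi 8 (fA B) (fA K (4 + l)))"
      by (rule phi_mult) (auto simp: oneform_fA fin_fA)
    also have "\<dots> = wedge (fA (mm K B) l) (fA (mm K B) (4 + l))"
      using l by (simp add: phi_fA)
    finally show "b l * (\<i> / 2) * phi 8 (fA B) (wedge (fA K l) (fA K (4 + l))) S = b l * (\<i> / 2) * wedge (fA (mm K B) l) (fA (mm K B) (4 + l)) S"
      by simp
  qed
  finally show ?thesis by (simp add: diag_fA)
qed

lemma wsign_lo_hi: "l < 4 \<Longrightarrow> wsign {l} {4 + m} = 1"
proof -
  assume "l < 4"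
  then have "invset {l} {4 + m} = {}" by (auto simp: invset_def)
  then show ?thesis by (simp add: wsign_inv)
qed

lemma dZ_at: "l < 4 \<Longrightarrow> dZ 4 c {l} = c l"
  unfolding dZ_def by (simp add: sum.delta)

lemma dZ_at_hi: "l < 4 \<Longrightarrow> dZ 4 c {4 + l} = 0"
  unfolding dZ_def by (intro sum.neutral) auto

lemma dZbar_at: "l < 4 \<Longrightarrow> dZbar 4 c {4 + l} = c l"
  unfolding dZbar_def by (simp add: sum.delta)

lemma dZbar_at_lo: "l < 4 \<Longrightarrow> dZbar 4 c {l} = 0"
  unfolding dZbar_def by (intro sum.neutral) auto

lemma wedge_dZ_dZbar_at:
  assumes l: "l < 4"
  shows "wedge (dZ 4 c) (dZbar 4 d) {l, 4 + l} = c l * d l"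
proof -
  have "l \<noteq> 4 + l" by simp
  from wedge_oneform_pair[OF oneform_dZ oneform_dZbar this]
  show ?thesis using l by (simp add: wsign_lo_hi dZ_at dZ_at_hi dZbar_at dZbar_at_lo)
qed

lemma diag_at:
  assumes l: "l < 4"
  shows "diag_form 4 K b {l, 4 + l} = (\<i> / 2) * (\<Sum>m<4. b m * (K m l * cnj (K m l)))"
  unfolding diag_form_def using l
  by (simp add: wedge_dZ_dZbar_at sum_distrib_left mult_ac)

lemma Dstd_at:
  assumes l: "l < 4"
  shows "Dstd b {l, 4 + l} = b l * (\<i> / 2)"
proof -
  have "Dstd b {l, 4 + l} = (\<Sum>m<4. if m = l then b l * (\<i> / 2) else 0)"
    unfolding Dstd_def
  proof (intro sum.cong refl)
    fix m assume m: "m \<in> {..<4::nat}"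
    have e: "({l, 4 + l} = {m} \<union> {4 + m}) \<longleftrightarrow> m = l" using l m by (auto simp: doubleton_eq_iff)
    have w: "wedge (ebas {m}) (ebas {4 + m}) {l, 4 + l} = (if {m} \<inter> {4+m} = {} \<and> {l, 4 + l} = {m} \<union> {4 + m} then wsign {m} {4+m} else 0)"
      by (rule wedge_ebas) auto
    have i: "{m} \<inter> {4+m} = {}" by auto
    show "b m * (\<i> / 2) * wedge (ebas {m}) (ebas {4 + m}) {l, 4 + l} = (if m = l then b l * (\<i> / 2) else 0)"
      unfolding w e using i m l wsign_lo_hi[of m m] by auto
  qed
  also have "\<dots> = b l * (\<i> / 2)" using l by (simp add: sum.delta')
  finally show ?thesis .
qed

lemma nat_mat_left_right_inverse:
  fixes A B :: "nat \<Rightarrow> nat \<Rightarrow> complex"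
  assumes AB: "\<forall>i<n. \<forall>k<n. (\<Sum>l<n. A i l * B l k) = (if i = k then 1 else 0)"
  shows "\<forall>i<n. \<forall>k<n. (\<Sum>l<n. B i l * A l k) = (if i = k then 1 else 0)"
proof -
  let ?A = "mat n n (\<lambda>(i, j). A i j)"
  let ?B = "mat n n (\<lambda>(i, j). B i j)"
  have sp: "(mat n n (\<lambda>(i, j). X i j) * mat n n (\<lambda>(i, j). Y i j)) $$ (i, k) = (\<Sum>l<n. X i l * Y l k)"
    if "i < n" "k < n" for X Y :: "nat \<Rightarrow> nat \<Rightarrow> complex" and i k
    using that by (simp add: scalar_prod_def row_def col_def) (rule sum.cong, auto)
  have AB': "?A * ?B = 1\<^sub>m n"
  proof (rule eq_matI)
    fix i k assume "i < dim_row (1\<^sub>m n)" "k < dim_col (1\<^sub>m n)"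
    then have ik: "i < n" "k < n" by simp_all
    have "(?A * ?B) $$ (i, k) = (\<Sum>l<n. A i l * B l k)" by (rule sp[OF ik])
    also have "\<dots> = (if i = k then 1 else 0)" using AB ik by simp
    also have "\<dots> = 1\<^sub>m n $$ (i, k)" using ik by simp
    finally show "(?A * ?B) $$ (i, k) = 1\<^sub>m n $$ (i, k)" .
  next
    show "dim_row (?A * ?B) = dim_row (1\<^sub>m n)" by simp
  next
    show "dim_col (?A * ?B) = dim_col (1\<^sub>m n)" by simp
  qed
  have BA: "?B * ?A = 1\<^sub>m n"
    by (rule mat_mult_left_right_inverse[of ?A n ?B]) (simp_all add: AB')
  show ?thesis
  proof (intro allI impI)
    fix i k assume ik: "i < n" "k < n"
    have "(\<Sum>l<n. B i l * A l k) = (?B * ?A) $$ (i, k)" by (rule sp[OF ik, symmetric])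
    also have "\<dots> = (if i = k then 1 else 0)" using ik by (simp add: BA)
    finally show "(\<Sum>l<n. B i l * A l k) = (if i = k then 1 else 0)" .
  qed
qed

lemma is_inv_sym: "is_inv A B \<Longrightarrow> is_inv B A"
  unfolding is_inv_def mm_def by (rule nat_mat_left_right_inverse)

lemma inv_exists: "Defs.invertible_mat 4 A \<Longrightarrow> \<exists>B. is_inv A B"
  unfolding Defs.invertible_mat_def is_inv_def mm_def by blast

lemma mm_assoc: "i < 4 \<Longrightarrow> k < 4 \<Longrightarrow> mm (mm X Y) Z i k = mm X (mm Y Z) i k"
proof -
  have "mm (mm X Y) Z i k = (\<Sum>l<4. \<Sum>m<4. X i m * (Y m l * Z l k))"
    unfolding mm_def by (simp add: sum_distrib_right mult.assoc)
  also have "\<dots> = (\<Sum>m<4. \<Sum>l<4. X i m * (Y m l * Z l k))" by (rule sum.swap)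
  also have "\<dots> = mm X (mm Y Z) i k"
    unfolding mm_def by (simp add: sum_distrib_left)
  finally show "mm (mm X Y) Z i k = mm X (mm Y Z) i k" .
qed

lemma mm_cong_right: "(\<forall>i<4. \<forall>k<4. Y i k = Y' i k) \<Longrightarrow> k < 4 \<Longrightarrow> mm X Y i k = mm X Y' i k"
  unfolding mm_def by (intro sum.cong) auto

lemma mm_id_left: "is_inv X Y \<Longrightarrow> i < 4 \<Longrightarrow> mm (mm X Y) Z i k = Z i k"
proof -
  assume XY: "is_inv X Y" and i: "i < 4"
  have "mm (mm X Y) Z i k = (\<Sum>l<4. (if i = l then 1 else 0) * Z l k)"
    unfolding mm_def[of "mm X Y"] using XY i unfolding is_inv_def by (intro sum.cong) auto
  also have "\<dots> = Z i k" using i by (simp add: sum_delta_mult)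
  finally show ?thesis .
qed

lemma mm_id_right: "is_inv Y Z \<Longrightarrow> k < 4 \<Longrightarrow> mm X (mm Y Z) i k = X i k"
proof -
  assume YZ: "is_inv Y Z" and k: "k < 4"
  have "mm X (mm Y Z) i k = (\<Sum>l<4. X i l * (if l = k then 1 else 0))"
    unfolding mm_def using YZ k unfolding is_inv_def mm_def by (intro sum.cong) auto
  also have "\<dots> = X i k" using k by (simp add: if_distrib sum.delta cong: if_cong)
  finally show ?thesis .
qed

lemma Dstd_V11: "Dstd b \<in> Vpq 4 1 1"
proof -
  have "\<forall>l\<in>{..<4}. (\<lambda>S. b l * (\<i> / 2) * wedge (ebas {l}) (ebas {4 + l}) S) \<in> Vpq 4 1 1"
  proof
    fix l :: nat assume "l \<in> {..<4}"
    then have "wedge (ebas {l}) (ebas {4 + l}) \<in> Vpq 4 (1 + 0) (0 + 1)"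
      by (intro wedge_Vpq ebas_single_V10 ebas_single_V01) auto
    from Vpq_scale[OF this, of "b l * (\<i> / 2)"]
    show "(\<lambda>S. b l * (\<i> / 2) * wedge (ebas {l}) (ebas {4 + l}) S) \<in> Vpq 4 1 1"
      by simp
  qed
  then show ?thesis unfolding Dstd_def by (intro Vpq_sum) auto
qed

lemma kahler_pos:
  assumes AB: "is_inv A B" and kah: "kahler 4 (diag_form 4 A c)" and l: "l < 4"
  shows "\<exists>t>0. c l = complex_of_real t"
proof -
  obtain A' where A': "Defs.invertible_mat 4 A'" and eq: "diag_form 4 A c = diag_form 4 A' (\<lambda>_. 1)"
    using kah unfolding kahler_def by blast
  obtain B' where A'B': "is_inv A' B'" using inv_exists[OF A'] by blast
  have BA: "is_inv B A" by (rule is_inv_sym[OF AB])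
  define K where "K = mm A' B"
  have "Dstd c = phi 8 (fA B) (phi 8 (fA A) (Dstd c))"
    by (rule phi_inv[OF AB, symmetric]) (use Vpq_fin[OF Dstd_V11] in simp)
  also have "\<dots> = phi 8 (fA B) (diag_form 4 A' (\<lambda>_. 1))" by (simp add: diag_phi[symmetric] eq)
  also have "\<dots> = diag_form 4 K (\<lambda>_. 1)" by (simp add: phi_diag K_def)
  finally have "Dstd c {l, 4 + l} = diag_form 4 K (\<lambda>_. 1) {l, 4 + l}" by simp
  then have "c l * (\<i> / 2) = (\<i> / 2) * (\<Sum>m<4. K m l * cnj (K m l))"
    by (simp add: Dstd_at diag_at l)
  then have cl: "c l = (\<Sum>m<4. K m l * cnj (K m l))" by simp
  have KR: "is_inv K (mm A B')"
    unfolding is_inv_def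
  proof (intro allI impI)
    fix i k :: nat assume ik: "i < 4" "k < 4"
    have "mm K (mm A B') i k = mm A' (mm B (mm A B')) i k" unfolding K_def by (rule mm_assoc[OF ik])
    also have "\<dots> = mm A' (mm (mm B A) B') i k"
      by (rule mm_cong_right) (auto simp: mm_assoc ik)
    also have "\<dots> = mm A' B' i k"
      by (rule mm_cong_right) (use BA ik mm_id_left[OF BA] in auto)
    also have "\<dots> = (if i = k then 1 else 0)" using A'B' ik by (simp add: is_inv_def)
    finally show "mm K (mm A B') i k = (if i = k then 1 else 0)" .
  qed
  have RK: "is_inv (mm A B') K" by (rule is_inv_sym[OF KR])
  have "(\<Sum>m<4. mm A B' l m * K m l) = 1" using RK l by (simp add: is_inv_def mm_def)
  then have ex: "\<exists>m. m < 4 \<and> K m l \<noteq> 0"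
  proof (rule contrapos_pp)
    assume "\<not> (\<exists>m. m < 4 \<and> K m l \<noteq> 0)"
    then have "\<forall>m\<in>{..<4}. mm A B' l m * K m l = 0" by auto
    then have "(\<Sum>m<4. mm A B' l m * K m l) = 0" by (rule sum.neutral)
    then show "(\<Sum>m<4. mm A B' l m * K m l) \<noteq> 1" by simp
  qed
  then obtain m where m: "m < 4" "K m l \<noteq> 0" by blast
  have e: "(\<Sum>m<4. K m l * cnj (K m l)) = complex_of_real (\<Sum>m<4. (cmod (K m l))^2)"
    unfolding of_real_sum by (intro sum.cong refl) (simp only: complex_norm_square)
  have pos: "(\<Sum>m<4. (cmod (K m l))^2) > 0"
  proof -
    have "(\<Sum>m<4. (cmod (K m l))^2) \<ge> (cmod (K m l))^2"
      by (rule member_le_sum) (use m in auto)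
    moreover have "(cmod (K m l))^2 > 0" using m by simp
    ultimately show ?thesis by linarith
  qed
  show ?thesis
    by (rule exI[of _ "\<Sum>m<4. (cmod (K m l))^2"]) (simp only: pos cl e simp_thms)
qed

definition lor :: "real \<Rightarrow> real \<Rightarrow> real \<Rightarrow> real \<Rightarrow> real \<Rightarrow> real \<Rightarrow> real \<Rightarrow> real \<Rightarrow> real" where
  "lor p r x y p' r' x' y' = (p * r' + p' * r) / 2 - x * x' - y * y'"

lemma cs2: "(x * X + y * Y)^2 \<le> (x^2 + y^2) * (X^2 + Y^2)" for x y X Y :: real
proof -
  have "(x^2 + y^2) * (X^2 + Y^2) - (x * X + y * Y)^2 = (x * Y - y * X)^2"
    by (simp add: power2_eq_square algebra_simps)
  then show ?thesis by (metis diff_ge_0_iff_ge zero_le_power2)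
qed

lemma lor_ortho:
  fixes p r x y P R X Y :: real
  assumes v: "p * r - x^2 - y^2 > 0" and o: "lor p r x y P R X Y = 0"
  shows "P * R - X^2 - Y^2 \<le> 0"
proof (rule ccontr)
  assume "\<not> P * R - X^2 - Y^2 \<le> 0"
  then have W: "P * R > X^2 + Y^2" by simp
  have q0: "x^2 + y^2 \<ge> 0" "X^2 + Y^2 \<ge> 0" by simp_all
  have PR: "P * R > 0" using W q0 by linarith
  have pr: "p * r > x^2 + y^2" using v by simp
  have e: "p * R + P * r = 2 * (x * X + y * Y)" using o by (simp add: lor_def field_simps)
  have "4 * (p * r) * (P * R) \<le> (p * R + P * r)^2"
  proof -
    have "(p * R + P * r)^2 - 4 * (p * r) * (P * R) = (p * R - P * r)^2"
      by (simp add: power2_eq_square algebra_simps)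
    then show ?thesis by (metis diff_ge_0_iff_ge zero_le_power2)
  qed
  also have "\<dots> = 4 * (x * X + y * Y)^2" unfolding e by (simp add: power2_eq_square algebra_simps)
  also have "\<dots> \<le> 4 * ((x^2 + y^2) * (X^2 + Y^2))" using cs2[of x X y Y] by simp
  finally have 1: "(p * r) * (P * R) \<le> (x^2 + y^2) * (X^2 + Y^2)" by simp
  have "(x^2 + y^2) * (X^2 + Y^2) \<le> (x^2 + y^2) * (P * R)"
    using W q0 by (intro mult_left_mono) auto
  also have "\<dots> < (p * r) * (P * R)" using pr PR by (intro mult_strict_right_mono) auto
  finally show False using 1 by simp
qed

lemma lor_rcs:
  fixes p r x y P R X Y :: real
  assumes v: "p * r - x^2 - y^2 > 0"
  shows "(p * r - x^2 - y^2) * (P * R - X^2 - Y^2) \<le> (lor p r x y P R X Y)^2"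
proof -
  define a where "a = p * r - x^2 - y^2"
  define b where "b = lor p r x y P R X Y"
  define w where "w = P * R - X^2 - Y^2"
  have o: "lor p r x y (a * P - b * p) (a * R - b * r) (a * X - b * x) (a * Y - b * y) = 0"
    unfolding a_def b_def lor_def by (simp add: power2_eq_square field_simps)
  have "(a * P - b * p) * (a * R - b * r) - (a * X - b * x)^2 - (a * Y - b * y)^2 \<le> 0"
    by (rule lor_ortho[OF v o])
  moreover have "(a * P - b * p) * (a * R - b * r) - (a * X - b * x)^2 - (a * Y - b * y)^2 = a * (a * w - b^2)"
    unfolding a_def b_def w_def lor_def by (simp add: power2_eq_square field_simps)
  ultimately have "a * (a * w - b^2) \<le> 0" by simp
  moreover have "a > 0" using v a_def by simp
  ultimately have "a * w - b^2 \<le> 0" by (simp add: mult_le_0_iff)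
  then show ?thesis unfolding a_def b_def w_def by simp
qed

lemma lor_sym: "lor p r x y p' r' x' y' = lor p' r' x' y' p r x y"
  unfolding lor_def by (simp add: algebra_simps)

lemma lor_self: "lor p r x y p r x y = p * r - x^2 - y^2"
  unfolding lor_def by (simp add: power2_eq_square field_simps)

lemma lor_lin2:
  fixes z P R X Y :: "nat \<Rightarrow> real"
  assumes "finite J"
  shows "lor p r x y (\<Sum>j\<in>J. z j * P j) (\<Sum>j\<in>J. z j * R j) (\<Sum>j\<in>J. z j * X j) (\<Sum>j\<in>J. z j * Y j)
       = (\<Sum>j\<in>J. z j * lor p r x y (P j) (R j) (X j) (Y j))"
  using assms
proof (induct J rule: finite_induct)
  case empty then show ?case by (simp add: lor_def)
next
  case (insert a F)
  then show ?case by (simp add: lor_def algebra_simps add_divide_distrib)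
qed

lemma lor_inj:
  fixes P R X Y z :: "nat \<Rightarrow> real"
  assumes d: "\<forall>k<4. P k * R k - (X k)^2 - (Y k)^2 > 0"
    and h: "\<forall>k<4. (\<Sum>j<4. (if j = k then 0 else 2 * lor (P k) (R k) (X k) (Y k) (P j) (R j) (X j) (Y j)) * z j) = 0"
  shows "\<forall>k<4. z k = 0"
proof -
  define dd where "dd k = P k * R k - (X k)^2 - (Y k)^2" for k
  define WP where "WP = (\<Sum>j<4. z j * P j)"
  define WR where "WR = (\<Sum>j<4. z j * R j)"
  define WX where "WX = (\<Sum>j<4. z j * X j)"
  define WY where "WY = (\<Sum>j<4. z j * Y j)"
  define lw where "lw k = lor (P k) (R k) (X k) (Y k) WP WR WX WY" for k
  define lww where "lww = lor WP WR WX WY WP WR WX WY"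
  have self: "lor (P k) (R k) (X k) (Y k) (P k) (R k) (X k) (Y k) = dd k" for k
    unfolding lor_def dd_def by (simp add: power2_eq_square field_simps)
  have lwk: "lw k = z k * dd k" if k: "k < 4" for k
  proof -
    have "lw k = (\<Sum>j<4. z j * lor (P k) (R k) (X k) (Y k) (P j) (R j) (X j) (Y j))"
      unfolding lw_def WP_def WR_def WX_def WY_def by (rule lor_lin2) simp
    also have "\<dots> = (\<Sum>j<4. (if j = k then z k * dd k else 0) + 1/2 * ((if j = k then 0 else 2 * lor (P k) (R k) (X k) (Y k) (P j) (R j) (X j) (Y j)) * z j))"
      by (intro sum.cong refl) (auto simp: self)
    also have "\<dots> = z k * dd k + 1/2 * (\<Sum>j<4. (if j = k then 0 else 2 * lor (P k) (R k) (X k) (Y k) (P j) (R j) (X j) (Y j)) * z j)"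
      using k by (simp add: sum.distrib sum_distrib_left)
    also have "\<dots> = z k * dd k" using h k by simp
    finally show ?thesis .
  qed
  have "lor WP WR WX WY (\<Sum>j<4. z j * P j) (\<Sum>j<4. z j * R j) (\<Sum>j<4. z j * X j) (\<Sum>j<4. z j * Y j)
      = (\<Sum>k<4. z k * lor WP WR WX WY (P k) (R k) (X k) (Y k))"
    by (rule lor_lin2) simp
  then have "lww = (\<Sum>k<4. z k * lor WP WR WX WY (P k) (R k) (X k) (Y k))"
    unfolding lww_def WP_def[symmetric] WR_def[symmetric] WX_def[symmetric] WY_def[symmetric] .
  also have "\<dots> = (\<Sum>k<4. z k * lw k)" unfolding lw_def by (simp add: lor_sym)
  also have "\<dots> = (\<Sum>k<4. (z k)^2 * dd k)" by (intro sum.cong refl) (simp add: lwk power2_eq_square)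
  finally have lww: "lww = (\<Sum>k<4. (z k)^2 * dd k)" .
  have ddpos: "dd k > 0" if "k < 4" for k using d that dd_def by simp
  have bound: "lww \<le> (z k)^2 * dd k" if k: "k < 4" for k
  proof -
    have "dd k * lww \<le> (lw k)^2"
      using lor_rcs[of "P k" "R k" "X k" "Y k" WP WR WX WY] d k unfolding dd_def lww_def lw_def lor_self by simp
    also have "\<dots> = dd k * ((z k)^2 * dd k)" using lwk[OF k] by (simp add: power2_eq_square)
    finally show ?thesis using ddpos[OF k] by simp
  qed
  have "(\<Sum>k<4::nat. lww) \<le> (\<Sum>k<4. (z k)^2 * dd k)" by (intro sum_mono) (simp add: bound)
  then have "4 * lww \<le> lww" using lww by simp
  then have "lww \<le> 0" by simp
  moreover have "(\<Sum>k<4. (z k)^2 * dd k) \<ge> 0"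
    using ddpos by (intro sum_nonneg) (simp add: less_imp_le)
  ultimately have "(\<Sum>k<4. (z k)^2 * dd k) = 0" using lww by simp
  moreover have nn: "\<forall>k\<in>{..<4}. 0 \<le> (z k)^2 * dd k"
  proof
    fix k :: nat assume "k \<in> {..<4}"
    then have "0 \<le> dd k" using ddpos by (simp add: less_imp_le)
    then show "0 \<le> (z k)^2 * dd k" using zero_le_power2[of "z k"] by (rule mult_nonneg_nonneg[rotated])
  qed
  ultimately have "\<forall>k\<in>{..<4}. (z k)^2 * dd k = 0"
    using sum_nonneg_eq_0_iff[of "{..<4}" "\<lambda>k. (z k)^2 * dd k"] by simp
  then show ?thesis
  proof (intro allI impI)
    fix k :: nat assume z: "\<forall>k\<in>{..<4}. (z k)^2 * dd k = 0" and k: "k < 4"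
    then have "(z k)^2 * dd k = 0" by simp
    moreover have "dd k \<noteq> 0" using ddpos[OF k] by simp
    ultimately show "z k = 0" by simp
  qed
qed

lemma sum4: "(\<Sum>j<4::nat. f j) = f 0 + f 1 + f 2 + f 3"
proof -
  have "{..<4::nat} = {0, 1, 2, 3}" by auto
  then show ?thesis by (simp add: add_ac)
qed

definition Delta :: "'a::comm_ring_1 \<Rightarrow> 'a \<Rightarrow> 'a \<Rightarrow> 'a \<Rightarrow> 'a \<Rightarrow> 'a \<Rightarrow> 'a" where
  "Delta a b c d e f = c^2*d^2 - 2*b*c*d*e + b^2*e^2 - 2*a*c*d*f - 2*a*b*e*f + a^2*f^2"

lemma lor_data:
  fixes P R X Y :: "nat \<Rightarrow> real"
  assumes d: "\<forall>k<4. P k * R k - (X k)^2 - (Y k)^2 > 0"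
  defines "cc \<equiv> \<lambda>k j. 2 * lor (P k) (R k) (X k) (Y k) (P j) (R j) (X j) (Y j)"
  shows "\<forall>l<4. \<forall>m<4. cc l m \<noteq> 0"
    and "Delta (cc 0 1) (cc 0 2) (cc 0 3) (cc 1 2) (cc 1 3) (cc 2 3) \<noteq> 0"
proof -
  show cnz: "\<forall>l<4. \<forall>m<4. cc l m \<noteq> 0"
  proof (intro allI impI)
    fix l m :: nat assume l: "l < 4" and m: "m < 4"
    have "0 < (P l * R l - (X l)^2 - (Y l)^2) * (P m * R m - (X m)^2 - (Y m)^2)"
      using d l m by simp
    also have "\<dots> \<le> (lor (P l) (R l) (X l) (Y l) (P m) (R m) (X m) (Y m))^2"
      by (rule lor_rcs) (use d l in simp)
    finally show "cc l m \<noteq> 0" unfolding cc_def by auto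
  qed
  have sym: "cc k j = cc j k" for k j unfolding cc_def using lor_sym by metis
  show "Delta (cc 0 1) (cc 0 2) (cc 0 3) (cc 1 2) (cc 1 3) (cc 2 3) \<noteq> 0"
  proof
    assume D: "Delta (cc 0 1) (cc 0 2) (cc 0 3) (cc 1 2) (cc 1 3) (cc 2 3) = 0"
    define a where "a = cc 0 1"
    define b where "b = cc 0 2"
    define c where "c = cc 0 3"
    define dd where "dd = cc 1 2"
    define e where "e = cc 1 3"
    define f where "f = cc 2 3"
    define z :: "nat \<Rightarrow> real" where "z j = (if j = 0 then 2*dd*e*f else if j = 1 then - c*dd*f - b*e*f + a*f^2
        else if j = 2 then - c*dd*e + b*e^2 - a*e*f else c*dd^2 - b*dd*e - a*dd*f)" for j
    have cc: "cc 0 1 = a" "cc 0 2 = b" "cc 0 3 = c" "cc 1 2 = dd" "cc 1 3 = e" "cc 2 3 = f"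
      "cc 1 0 = a" "cc 2 0 = b" "cc 3 0 = c" "cc 2 1 = dd" "cc 3 1 = e" "cc 3 2 = f"
      "cc 0 (Suc 0) = a" "cc (Suc 0) 0 = a" "cc (Suc 0) 2 = dd" "cc 2 (Suc 0) = dd" "cc (Suc 0) 3 = e" "cc 3 (Suc 0) = e"
      using sym by (simp_all add: a_def b_def c_def dd_def e_def f_def)
    have D': "Delta a b c dd e f = 0" using D by (simp add: a_def b_def c_def dd_def e_def f_def)
    have h: "\<forall>k<4. (\<Sum>j<4. (if j = k then 0 else 2 * lor (P k) (R k) (X k) (Y k) (P j) (R j) (X j) (Y j)) * z j) = 0"
    proof (intro allI impI)
      fix k :: nat assume k: "k < 4"
      have "(\<Sum>j<4. (if j = k then 0 else 2 * lor (P k) (R k) (X k) (Y k) (P j) (R j) (X j) (Y j)) * z j)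
          = (\<Sum>j<4. (if j = k then 0 else cc k j) * z j)" unfolding cc_def ..
      also have "\<dots> = 0"
      proof -
        have r0: "(\<Sum>j<4. (if j = 0 then 0 else cc 0 j) * z j) = 0"
          using D' unfolding sum4 by (simp add: cc z_def Delta_def power2_eq_square algebra_simps)
        have r1: "(\<Sum>j<4. (if j = 1 then 0 else cc 1 j) * z j) = 0"
          unfolding sum4 by (simp add: cc z_def power2_eq_square algebra_simps)
        have r2: "(\<Sum>j<4. (if j = 2 then 0 else cc 2 j) * z j) = 0"
          unfolding sum4 by (simp add: cc z_def power2_eq_square algebra_simps)
        have r3: "(\<Sum>j<4. (if j = 3 then 0 else cc 3 j) * z j) = 0"
          unfolding sum4 by (simp add: cc z_def power2_eq_square algebra_simps)
        have "k = 0 \<or> k = 1 \<or> k = 2 \<or> k = 3" using k by linarith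
        then show ?thesis using r0 r1 r2 r3 by metis
      qed
      finally show "(\<Sum>j<4. (if j = k then 0 else 2 * lor (P k) (R k) (X k) (Y k) (P j) (R j) (X j) (Y j)) * z j) = 0" .
    qed
    have "z 0 = 0" using lor_inj[OF d h] by simp
    then show False using cnz unfolding z_def dd_def e_def f_def by simp
  qed
qed

lemma eps_ebas: "l < 4 \<Longrightarrow> wedge (ebas {l}) (ebas {4 + l}) = ebas {l, 4 + l}"
proof
  fix S assume l: "l < 4"
  have w: "wedge (ebas {l}) (ebas {4 + l}) S = (if {l} \<inter> {4 + l} = {} \<and> S = {l} \<union> {4 + l} then wsign {l} {4 + l} else 0)"
    by (rule wedge_ebas) auto
  have u: "{l} \<union> {4 + l} = {l, 4 + l}" by auto
  show "wedge (ebas {l}) (ebas {4 + l}) S = ebas {l, 4 + l} S"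
    unfolding w u using wsign_lo_hi[OF l, of l] by (simp add: ebas_def)
qed

lemma wsign_pairs:
  assumes l: "l < 4" and m: "m < 4" and lm: "l \<noteq> m"
  shows "wsign {l, 4 + l} {m, 4 + m} = -1"
proof (cases "l < m")
  case True
  have "invset {l, 4 + l} {m, 4 + m} = {(4 + l, m)}"
    using True l m by (auto simp: invset_def)
  then show ?thesis by (simp add: wsign_inv)
next
  case False
  then have ml: "m < l" using lm by simp
  have "invset {l, 4 + l} {m, 4 + m} = {(l, m), (4 + l, m), (4 + l, 4 + m)}"
    using ml l m by (auto simp: invset_def)
  moreover have "card {(l, m), (4 + l, m), (4 + l, 4 + m)} = 3" by simp
  ultimately show ?thesis by (simp add: wsign_inv)
qed

lemma eps_eps:
  assumes l: "l < 4" and m: "m < 4"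
  shows "wedge (ebas {l, 4 + l}) (ebas {m, 4 + m}) S = (if l = m then 0 else - ebas {l, m, 4 + l, 4 + m} S)"
proof -
  have w: "wedge (ebas {l, 4 + l}) (ebas {m, 4 + m}) S = (if {l, 4 + l} \<inter> {m, 4 + m} = {} \<and> S = {l, 4 + l} \<union> {m, 4 + m} then wsign {l, 4 + l} {m, 4 + m} else 0)"
    by (rule wedge_ebas) auto
  have i: "({l, 4 + l} \<inter> {m, 4 + m} = {}) \<longleftrightarrow> l \<noteq> m" using l m by auto
  have u: "{l, 4 + l} \<union> {m, 4 + m} = {l, m, 4 + l, 4 + m}" by auto
  show ?thesis unfolding w i u using wsign_pairs[OF l m] by (auto simp: ebas_def)
qed

lemma wedge_bilin:
  assumes "finite I" "finite J"
  shows "wedge (\<lambda>S. \<Sum>l\<in>I. x l * E l S) (\<lambda>S. \<Sum>m\<in>J. y m * F m S) S = (\<Sum>l\<in>I. \<Sum>m\<in>J. x l * y m * wedge (E l) (F m) S)"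
  using assms by (simp add: wedge_suml wedge_sumr wedge_scalel wedge_scaler sum_distrib_left mult_ac)

definition Om0 :: "(nat \<Rightarrow> nat \<Rightarrow> nat \<Rightarrow> complex) \<Rightarrow> form" where
  "Om0 b = det2 (\<lambda>i j. Dstd (b i j))"

definition wco :: "(nat \<Rightarrow> nat \<Rightarrow> nat \<Rightarrow> complex) \<Rightarrow> nat \<Rightarrow> nat \<Rightarrow> complex" where
  "wco b l m = (if l = m then 0 else (b 0 0 l * b 1 1 m - b 0 1 l * b 1 0 m) / 4)"

lemma Dstd_eps: "Dstd c = (\<lambda>S. \<Sum>l<4. (c l * (\<i> / 2)) * ebas {l, 4 + l} S)"
  unfolding Dstd_def by (intro ext sum.cong refl) (simp add: eps_ebas)

lemma Om0_formula: "Om0 b = (\<lambda>S. \<Sum>l<4. \<Sum>m<4. wco b l m * ebas {l, m, 4 + l, 4 + m} S)"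
proof
  fix S
  have "Om0 b S = (\<Sum>l<4. \<Sum>m<4. (b 0 0 l * (\<i> / 2)) * (b 1 1 m * (\<i> / 2)) * wedge (ebas {l, 4 + l}) (ebas {m, 4 + m}) S)
      - (\<Sum>l<4. \<Sum>m<4. (b 0 1 l * (\<i> / 2)) * (b 1 0 m * (\<i> / 2)) * wedge (ebas {l, 4 + l}) (ebas {m, 4 + m}) S)"
    unfolding Om0_def det2_def Dstd_eps by (simp only: wedge_bilin finite_lessThan)
  also have "\<dots> = (\<Sum>l<4. \<Sum>m<4. wco b l m * ebas {l, m, 4 + l, 4 + m} S)"
    unfolding sum_subtractf[symmetric]
  proof (intro sum.cong refl)
    fix l m :: nat assume "l \<in> {..<4}" "m \<in> {..<4}"
    then have l: "l < 4" and m: "m < 4" by auto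
    show "b 0 0 l * (\<i> / 2) * (b 1 1 m * (\<i> / 2)) * wedge (ebas {l, 4 + l}) (ebas {m, 4 + m}) S -
         b 0 1 l * (\<i> / 2) * (b 1 0 m * (\<i> / 2)) * wedge (ebas {l, 4 + l}) (ebas {m, 4 + m}) S =
         wco b l m * ebas {l, m, 4 + l, 4 + m} S"
      unfolding eps_eps[OF l m] wco_def by (simp add: field_simps)
  qed
  finally show "Om0 b S = (\<Sum>l<4. \<Sum>m<4. wco b l m * ebas {l, m, 4 + l, 4 + m} S)" .
qed

lemma wedge_ebas_right:
  assumes U: "finite U"
  shows "wedge a (ebas U) S = (if finite S \<and> U \<subseteq> S then wsign (S - U) U * a (S - U) else 0)"
proof (cases "finite S")
  case True
  have "wedge a (ebas U) S = (\<Sum>T\<in>Pow S. if S - U = T \<and> U \<subseteq> S then wsign (S - U) U * a (S - U) else 0)"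
    unfolding wedge_def ebas_def
  proof (intro sum.cong refl)
    fix T assume "T \<in> Pow S"
    then have "T \<subseteq> S" by simp
    then have "(S - T = U) \<longleftrightarrow> (S - U = T \<and> U \<subseteq> S)" by auto
    then show "wsign T (S - T) * a T * (if S - T = U then 1 else 0) = (if S - U = T \<and> U \<subseteq> S then wsign (S - U) U * a (S - U) else 0)"
      by auto
  qed
  also have "\<dots> = (if U \<subseteq> S then wsign (S - U) U * a (S - U) else 0)"
    by (cases "U \<subseteq> S") (simp_all add: sum.delta' True)
  finally show ?thesis using True by simp
next
  case False then show ?thesis by (simp add: wedge_def)
qed

lemma L0_formula:
  "wedge a (Om0 b) S = (\<Sum>l<4. \<Sum>m<4. wco b l m * (if {l, m, 4 + l, 4 + m} \<subseteq> S \<and> finite S then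
      wsign (S - {l, m, 4 + l, 4 + m}) {l, m, 4 + l, 4 + m} * a (S - {l, m, 4 + l, 4 + m}) else 0))"
  unfolding Om0_formula by (simp add: wedge_sumr wedge_scaler wedge_ebas_right conj_commute)

definition ltset :: "nat \<Rightarrow> nat set \<Rightarrow> nat set" where
  "ltset a B = {b\<in>B. b < a}"

lemma ltset_empty[simp]: "ltset a {} = {}" by (simp add: ltset_def)
lemma ltset_insert[simp]: "ltset a (insert x B) = (if x < a then insert x (ltset a B) else ltset a B)"
  by (auto simp: ltset_def)

lemma wsign_insert_gen[simp]:
  assumes "a \<notin> A" "finite A" "finite B"
  shows "wsign (insert a A) B = (-1) ^ card (ltset a B) * wsign A B"
proof -
  have "wsign (insert a A) B = wsign {a} B * wsign A B"
    using wsign_Un1[of "{a}" A B] assms by simp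
  moreover have "invset {a} B = (\<lambda>r. (a, r)) ` ltset a B" by (auto simp: invset_def ltset_def)
  then have "card (invset {a} B) = card (ltset a B)" by (simp add: card_image inj_on_def)
  ultimately show ?thesis by (simp add: wsign_inv)
qed

lemma wco_diag[simp]: "wco b l l = 0"
  by (simp add: wco_def)

definition cco :: "(nat \<Rightarrow> nat \<Rightarrow> nat \<Rightarrow> complex) \<Rightarrow> nat \<Rightarrow> nat \<Rightarrow> complex" where
  "cco b l m = wco b l m + wco b m l"

lemma L0_20_0: "wedge a (Om0 b) {0, 1, 2, 3, 4, 5} = (cco b 0 1) * a {2, 3}"
  unfolding L0_formula sum4 by (simp add: insert_Diff_if algebra_simps cco_def)

lemma L0_20_1: "wedge a (Om0 b) {0, 1, 2, 3, 4, 6} = (-cco b 0 2) * a {1, 3}"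
  unfolding L0_formula sum4 by (simp add: insert_Diff_if algebra_simps cco_def)

lemma L0_20_2: "wedge a (Om0 b) {0, 1, 2, 3, 4, 7} = (cco b 0 3) * a {1, 2}"
  unfolding L0_formula sum4 by (simp add: insert_Diff_if algebra_simps cco_def)

lemma L0_20_3: "wedge a (Om0 b) {0, 1, 2, 3, 5, 6} = (cco b 1 2) * a {0, 3}"
  unfolding L0_formula sum4 by (simp add: insert_Diff_if algebra_simps cco_def)

lemma L0_20_4: "wedge a (Om0 b) {0, 1, 2, 3, 5, 7} = (-cco b 1 3) * a {0, 2}"
  unfolding L0_formula sum4 by (simp add: insert_Diff_if algebra_simps cco_def)

lemma L0_20_5: "wedge a (Om0 b) {0, 1, 2, 3, 6, 7} = (cco b 2 3) * a {0, 1}"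
  unfolding L0_formula sum4 by (simp add: insert_Diff_if algebra_simps cco_def)

lemma L0_11_0: "wedge a (Om0 b) {0, 1, 2, 4, 5, 6} = (cco b 0 1) * a {2, 6} + (cco b 0 2) * a {1, 5} + (cco b 1 2) * a {0, 4}"
  unfolding L0_formula sum4 by (simp add: insert_Diff_if algebra_simps cco_def)

lemma L0_11_1: "wedge a (Om0 b) {0, 1, 2, 4, 5, 7} = (cco b 0 1) * a {2, 7}"
  unfolding L0_formula sum4 by (simp add: insert_Diff_if algebra_simps cco_def)

lemma L0_11_2: "wedge a (Om0 b) {0, 1, 2, 4, 6, 7} = (-cco b 0 2) * a {1, 7}"
  unfolding L0_formula sum4 by (simp add: insert_Diff_if algebra_simps cco_def)

lemma L0_11_3: "wedge a (Om0 b) {0, 1, 2, 5, 6, 7} = (cco b 1 2) * a {0, 7}"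
  unfolding L0_formula sum4 by (simp add: insert_Diff_if algebra_simps cco_def)

lemma L0_11_4: "wedge a (Om0 b) {0, 1, 3, 4, 5, 6} = (cco b 0 1) * a {3, 6}"
  unfolding L0_formula sum4 by (simp add: insert_Diff_if algebra_simps cco_def)

lemma L0_11_5: "wedge a (Om0 b) {0, 1, 3, 4, 5, 7} = (cco b 0 1) * a {3, 7} + (cco b 0 3) * a {1, 5} + (cco b 1 3) * a {0, 4}"
  unfolding L0_formula sum4 by (simp add: insert_Diff_if algebra_simps cco_def)

lemma L0_11_6: "wedge a (Om0 b) {0, 1, 3, 4, 6, 7} = (cco b 0 3) * a {1, 6}"
  unfolding L0_formula sum4 by (simp add: insert_Diff_if algebra_simps cco_def)

lemma L0_11_7: "wedge a (Om0 b) {0, 1, 3, 5, 6, 7} = (-cco b 1 3) * a {0, 6}"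
  unfolding L0_formula sum4 by (simp add: insert_Diff_if algebra_simps cco_def)

lemma L0_11_8: "wedge a (Om0 b) {0, 2, 3, 4, 5, 6} = (-cco b 0 2) * a {3, 5}"
  unfolding L0_formula sum4 by (simp add: insert_Diff_if algebra_simps cco_def)

lemma L0_11_9: "wedge a (Om0 b) {0, 2, 3, 4, 5, 7} = (cco b 0 3) * a {2, 5}"
  unfolding L0_formula sum4 by (simp add: insert_Diff_if algebra_simps cco_def)

lemma L0_11_10: "wedge a (Om0 b) {0, 2, 3, 4, 6, 7} = (cco b 0 2) * a {3, 7} + (cco b 0 3) * a {2, 6} + (cco b 2 3) * a {0, 4}"
  unfolding L0_formula sum4 by (simp add: insert_Diff_if algebra_simps cco_def)

lemma L0_11_11: "wedge a (Om0 b) {0, 2, 3, 5, 6, 7} = (cco b 2 3) * a {0, 5}"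
  unfolding L0_formula sum4 by (simp add: insert_Diff_if algebra_simps cco_def)

lemma L0_11_12: "wedge a (Om0 b) {1, 2, 3, 4, 5, 6} = (cco b 1 2) * a {3, 4}"
  unfolding L0_formula sum4 by (simp add: insert_Diff_if algebra_simps cco_def)

lemma L0_11_13: "wedge a (Om0 b) {1, 2, 3, 4, 5, 7} = (-cco b 1 3) * a {2, 4}"
  unfolding L0_formula sum4 by (simp add: insert_Diff_if algebra_simps cco_def)

lemma L0_11_14: "wedge a (Om0 b) {1, 2, 3, 4, 6, 7} = (cco b 2 3) * a {1, 4}"
  unfolding L0_formula sum4 by (simp add: insert_Diff_if algebra_simps cco_def)

lemma L0_11_15: "wedge a (Om0 b) {1, 2, 3, 5, 6, 7} = (cco b 1 2) * a {3, 7} + (cco b 1 3) * a {2, 6} + (cco b 2 3) * a {1, 5}"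
  unfolding L0_formula sum4 by (simp add: insert_Diff_if algebra_simps cco_def)

lemma L0_02_0: "wedge a (Om0 b) {0, 1, 4, 5, 6, 7} = (cco b 0 1) * a {6, 7}"
  unfolding L0_formula sum4 by (simp add: insert_Diff_if algebra_simps cco_def)

lemma L0_02_1: "wedge a (Om0 b) {0, 2, 4, 5, 6, 7} = (-cco b 0 2) * a {5, 7}"
  unfolding L0_formula sum4 by (simp add: insert_Diff_if algebra_simps cco_def)

lemma L0_02_2: "wedge a (Om0 b) {0, 3, 4, 5, 6, 7} = (cco b 0 3) * a {5, 6}"
  unfolding L0_formula sum4 by (simp add: insert_Diff_if algebra_simps cco_def)

lemma L0_02_3: "wedge a (Om0 b) {1, 2, 4, 5, 6, 7} = (cco b 1 2) * a {4, 7}"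
  unfolding L0_formula sum4 by (simp add: insert_Diff_if algebra_simps cco_def)

lemma L0_02_4: "wedge a (Om0 b) {1, 3, 4, 5, 6, 7} = (-cco b 1 3) * a {4, 6}"
  unfolding L0_formula sum4 by (simp add: insert_Diff_if algebra_simps cco_def)

lemma L0_02_5: "wedge a (Om0 b) {2, 3, 4, 5, 6, 7} = (cco b 2 3) * a {4, 5}"
  unfolding L0_formula sum4 by (simp add: insert_Diff_if algebra_simps cco_def)

lemma lo_form:
  assumes "A \<subseteq> {..<4::nat}"
  shows "\<exists>b0 b1 b2 b3. A = (if b0 then {0} else {}) \<union> (if b1 then {1} else {}) \<union> (if b2 then {2} else {}) \<union> (if b3 then {3} else {})"
proof (intro exI)
  have "\<And>x. x \<in> A \<Longrightarrow> x = 0 \<or> x = 1 \<or> x = 2 \<or> x = 3" using assms by force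
  then show "A = (if 0 \<in> A then {0} else {}) \<union> (if 1 \<in> A then {1} else {}) \<union> (if 2 \<in> A then {2} else {}) \<union> (if 3 \<in> A then {3} else {})"
    by (auto split: if_splits)
qed

lemma hi_form:
  assumes "A \<subseteq> {4..<8::nat}"
  shows "\<exists>b0 b1 b2 b3. A = (if b0 then {4} else {}) \<union> (if b1 then {5} else {}) \<union> (if b2 then {6} else {}) \<union> (if b3 then {7} else {})"
proof (intro exI)
  have "\<And>x. x \<in> A \<Longrightarrow> x = 4 \<or> x = 5 \<or> x = 6 \<or> x = 7" using assms by force
  then show "A = (if 4 \<in> A then {4} else {}) \<union> (if 5 \<in> A then {5} else {}) \<union> (if 6 \<in> A then {6} else {}) \<union> (if 7 \<in> A then {7} else {})"
    by (auto split: if_splits)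
qed

lemma lo_card0:
  assumes "A \<subseteq> {..<4::nat}" "card A = 0"
  shows "A = {}"
proof -
  obtain b0 b1 b2 b3 where A: "A = (if b0 then {0} else {}) \<union> (if b1 then {1} else {}) \<union> (if b2 then {2} else {}) \<union> (if b3 then {3} else {})"
    using lo_form[OF assms(1)] by blast
  show ?thesis using assms(2) unfolding A by (cases b0; cases b1; cases b2; cases b3) (simp_all add: insert_commute)
qed

lemma lo_card1:
  assumes "A \<subseteq> {..<4::nat}" "card A = 1"
  shows "A = {0} \<or> A = {1} \<or> A = {2} \<or> A = {3}"
proof -
  obtain b0 b1 b2 b3 where A: "A = (if b0 then {0} else {}) \<union> (if b1 then {1} else {}) \<union> (if b2 then {2} else {}) \<union> (if b3 then {3} else {})"
    using lo_form[OF assms(1)] by blast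
  show ?thesis using assms(2) unfolding A by (cases b0; cases b1; cases b2; cases b3) (simp_all add: insert_commute)
qed

lemma lo_card2:
  assumes "A \<subseteq> {..<4::nat}" "card A = 2"
  shows "A = {0, 1} \<or> A = {0, 2} \<or> A = {0, 3} \<or> A = {1, 2} \<or> A = {1, 3} \<or> A = {2, 3}"
proof -
  obtain b0 b1 b2 b3 where A: "A = (if b0 then {0} else {}) \<union> (if b1 then {1} else {}) \<union> (if b2 then {2} else {}) \<union> (if b3 then {3} else {})"
    using lo_form[OF assms(1)] by blast
  show ?thesis using assms(2) unfolding A by (cases b0; cases b1; cases b2; cases b3) (simp_all add: insert_commute)
qed

lemma lo_card3:
  assumes "A \<subseteq> {..<4::nat}" "card A = 3"
  shows "A = {0, 1, 2} \<or> A = {0, 1, 3} \<or> A = {0, 2, 3} \<or> A = {1, 2, 3}"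
proof -
  obtain b0 b1 b2 b3 where A: "A = (if b0 then {0} else {}) \<union> (if b1 then {1} else {}) \<union> (if b2 then {2} else {}) \<union> (if b3 then {3} else {})"
    using lo_form[OF assms(1)] by blast
  show ?thesis using assms(2) unfolding A by (cases b0; cases b1; cases b2; cases b3) (simp_all add: insert_commute)
qed

lemma lo_card4:
  assumes "A \<subseteq> {..<4::nat}" "card A = 4"
  shows "A = {0, 1, 2, 3}"
proof -
  obtain b0 b1 b2 b3 where A: "A = (if b0 then {0} else {}) \<union> (if b1 then {1} else {}) \<union> (if b2 then {2} else {}) \<union> (if b3 then {3} else {})"
    using lo_form[OF assms(1)] by blast
  show ?thesis using assms(2) unfolding A by (cases b0; cases b1; cases b2; cases b3) (simp_all add: insert_commute)
qed

lemma hi_card0: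
  assumes "A \<subseteq> {4..<8::nat}" "card A = 0"
  shows "A = {}"
proof -
  obtain b0 b1 b2 b3 where A: "A = (if b0 then {4} else {}) \<union> (if b1 then {5} else {}) \<union> (if b2 then {6} else {}) \<union> (if b3 then {7} else {})"
    using hi_form[OF assms(1)] by blast
  show ?thesis using assms(2) unfolding A by (cases b0; cases b1; cases b2; cases b3) (simp_all add: insert_commute)
qed

lemma hi_card1:
  assumes "A \<subseteq> {4..<8::nat}" "card A = 1"
  shows "A = {4} \<or> A = {5} \<or> A = {6} \<or> A = {7}"
proof -
  obtain b0 b1 b2 b3 where A: "A = (if b0 then {4} else {}) \<union> (if b1 then {5} else {}) \<union> (if b2 then {6} else {}) \<union> (if b3 then {7} else {})"
    using hi_form[OF assms(1)] by blast
  show ?thesis using assms(2) unfolding A by (cases b0; cases b1; cases b2; cases b3) (simp_all add: insert_commute)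
qed

lemma hi_card2:
  assumes "A \<subseteq> {4..<8::nat}" "card A = 2"
  shows "A = {4, 5} \<or> A = {4, 6} \<or> A = {4, 7} \<or> A = {5, 6} \<or> A = {5, 7} \<or> A = {6, 7}"
proof -
  obtain b0 b1 b2 b3 where A: "A = (if b0 then {4} else {}) \<union> (if b1 then {5} else {}) \<union> (if b2 then {6} else {}) \<union> (if b3 then {7} else {})"
    using hi_form[OF assms(1)] by blast
  show ?thesis using assms(2) unfolding A by (cases b0; cases b1; cases b2; cases b3) (simp_all add: insert_commute)
qed

lemma hi_card3:
  assumes "A \<subseteq> {4..<8::nat}" "card A = 3"
  shows "A = {4, 5, 6} \<or> A = {4, 5, 7} \<or> A = {4, 6, 7} \<or> A = {5, 6, 7}"
proof -
  obtain b0 b1 b2 b3 where A: "A = (if b0 then {4} else {}) \<union> (if b1 then {5} else {}) \<union> (if b2 then {6} else {}) \<union> (if b3 then {7} else {})"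
    using hi_form[OF assms(1)] by blast
  show ?thesis using assms(2) unfolding A by (cases b0; cases b1; cases b2; cases b3) (simp_all add: insert_commute)
qed

lemma hi_card4:
  assumes "A \<subseteq> {4..<8::nat}" "card A = 4"
  shows "A = {4, 5, 6, 7}"
proof -
  obtain b0 b1 b2 b3 where A: "A = (if b0 then {4} else {}) \<union> (if b1 then {5} else {}) \<union> (if b2 then {6} else {}) \<union> (if b3 then {7} else {})"
    using hi_form[OF assms(1)] by blast
  show ?thesis using assms(2) unfolding A by (cases b0; cases b1; cases b2; cases b3) (simp_all add: insert_commute)
qed

lemma enum_20:
  fixes S :: "nat set"
  assumes "S \<subseteq> {..<8}" "card (S \<inter> {..<4}) = 2" "card (S \<inter> {4..<8}) = 0"
  shows "S = {0, 1} \<or> S = {0, 2} \<or> S = {0, 3} \<or> S = {1, 2} \<or> S = {1, 3} \<or> S = {2, 3}"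
proof -
  define A where "A = S \<inter> {..<4}"
  define B where "B = S \<inter> {4..<8}"
  have S: "S = A \<union> B" using assms(1) unfolding A_def B_def by auto
  have A: "A \<subseteq> {..<4}" and B: "B \<subseteq> {4..<8}" unfolding A_def B_def by auto
  note dA = lo_card2[OF A assms(2)[folded A_def]]
  note dB = hi_card0[OF B assms(3)[folded B_def]]
  from dA dB S show ?thesis by (elim disjE) (simp_all add: insert_commute)
qed

lemma enum_42:
  fixes S :: "nat set"
  assumes "S \<subseteq> {..<8}" "card (S \<inter> {..<4}) = 4" "card (S \<inter> {4..<8}) = 2"
  shows "S = {0, 1, 2, 3, 4, 5} \<or> S = {0, 1, 2, 3, 4, 6} \<or> S = {0, 1, 2, 3, 4, 7} \<or> S = {0, 1, 2, 3, 5, 6} \<or> S = {0, 1, 2, 3, 5, 7} \<or> S = {0, 1, 2, 3, 6, 7}"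
proof -
  define A where "A = S \<inter> {..<4}"
  define B where "B = S \<inter> {4..<8}"
  have S: "S = A \<union> B" using assms(1) unfolding A_def B_def by auto
  have A: "A \<subseteq> {..<4}" and B: "B \<subseteq> {4..<8}" unfolding A_def B_def by auto
  note dA = lo_card4[OF A assms(2)[folded A_def]]
  note dB = hi_card2[OF B assms(3)[folded B_def]]
  from dA dB S show ?thesis by (elim disjE) (simp_all add: insert_commute)
qed

lemma enum_11:
  fixes S :: "nat set"
  assumes "S \<subseteq> {..<8}" "card (S \<inter> {..<4}) = 1" "card (S \<inter> {4..<8}) = 1"
  shows "S = {0, 4} \<or> S = {0, 5} \<or> S = {0, 6} \<or> S = {0, 7} \<or> S = {1, 4} \<or> S = {1, 5} \<or> S = {1, 6} \<or> S = {1, 7} \<or> S = {2, 4} \<or> S = {2, 5} \<or> S = {2, 6} \<or> S = {2, 7} \<or> S = {3, 4} \<or> S = {3, 5} \<or> S = {3, 6} \<or> S = {3, 7}"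
proof -
  define A where "A = S \<inter> {..<4}"
  define B where "B = S \<inter> {4..<8}"
  have S: "S = A \<union> B" using assms(1) unfolding A_def B_def by auto
  have A: "A \<subseteq> {..<4}" and B: "B \<subseteq> {4..<8}" unfolding A_def B_def by auto
  note dA = lo_card1[OF A assms(2)[folded A_def]]
  note dB = hi_card1[OF B assms(3)[folded B_def]]
  from dA dB S show ?thesis by (elim disjE) (simp_all add: insert_commute)
qed

lemma enum_33:
  fixes S :: "nat set"
  assumes "S \<subseteq> {..<8}" "card (S \<inter> {..<4}) = 3" "card (S \<inter> {4..<8}) = 3"
  shows "S = {0, 1, 2, 4, 5, 6} \<or> S = {0, 1, 2, 4, 5, 7} \<or> S = {0, 1, 2, 4, 6, 7} \<or> S = {0, 1, 2, 5, 6, 7} \<or> S = {0, 1, 3, 4, 5, 6} \<or> S = {0, 1, 3, 4, 5, 7} \<or> S = {0, 1, 3, 4, 6, 7} \<or> S = {0, 1, 3, 5, 6, 7} \<or> S = {0, 2, 3, 4, 5, 6} \<or> S = {0, 2, 3, 4, 5, 7} \<or> S = {0, 2, 3, 4, 6, 7} \<or> S = {0, 2, 3, 5, 6, 7} \<or> S = {1, 2, 3, 4, 5, 6} \<or> S = {1, 2, 3, 4, 5, 7} \<or> S = {1, 2, 3, 4, 6, 7} \<or> S = {1, 2, 3, 5, 6, 7}"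
proof -
  define A where "A = S \<inter> {..<4}"
  define B where "B = S \<inter> {4..<8}"
  have S: "S = A \<union> B" using assms(1) unfolding A_def B_def by auto
  have A: "A \<subseteq> {..<4}" and B: "B \<subseteq> {4..<8}" unfolding A_def B_def by auto
  note dA = lo_card3[OF A assms(2)[folded A_def]]
  note dB = hi_card3[OF B assms(3)[folded B_def]]
  from dA dB S show ?thesis by (elim disjE) (simp_all add: insert_commute)
qed

lemma enum_02:
  fixes S :: "nat set"
  assumes "S \<subseteq> {..<8}" "card (S \<inter> {..<4}) = 0" "card (S \<inter> {4..<8}) = 2"
  shows "S = {4, 5} \<or> S = {4, 6} \<or> S = {4, 7} \<or> S = {5, 6} \<or> S = {5, 7} \<or> S = {6, 7}"
proof -
  define A where "A = S \<inter> {..<4}"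
  define B where "B = S \<inter> {4..<8}"
  have S: "S = A \<union> B" using assms(1) unfolding A_def B_def by auto
  have A: "A \<subseteq> {..<4}" and B: "B \<subseteq> {4..<8}" unfolding A_def B_def by auto
  note dA = lo_card0[OF A assms(2)[folded A_def]]
  note dB = hi_card2[OF B assms(3)[folded B_def]]
  from dA dB S show ?thesis by (elim disjE) (simp_all add: insert_commute)
qed

lemma enum_24:
  fixes S :: "nat set"
  assumes "S \<subseteq> {..<8}" "card (S \<inter> {..<4}) = 2" "card (S \<inter> {4..<8}) = 4"
  shows "S = {0, 1, 4, 5, 6, 7} \<or> S = {0, 2, 4, 5, 6, 7} \<or> S = {0, 3, 4, 5, 6, 7} \<or> S = {1, 2, 4, 5, 6, 7} \<or> S = {1, 3, 4, 5, 6, 7} \<or> S = {2, 3, 4, 5, 6, 7}"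
proof -
  define A where "A = S \<inter> {..<4}"
  define B where "B = S \<inter> {4..<8}"
  have S: "S = A \<union> B" using assms(1) unfolding A_def B_def by auto
  have A: "A \<subseteq> {..<4}" and B: "B \<subseteq> {4..<8}" unfolding A_def B_def by auto
  note dA = lo_card2[OF A assms(2)[folded A_def]]
  note dB = hi_card4[OF B assms(3)[folded B_def]]
  from dA dB S show ?thesis by (elim disjE) (simp_all add: insert_commute)
qed

definition adjH :: "complex \<Rightarrow> complex \<Rightarrow> complex \<Rightarrow> complex \<Rightarrow> complex \<Rightarrow> complex \<Rightarrow> nat \<Rightarrow> nat \<Rightarrow> complex" where
  "adjH a b c d e f i k = (
    if i = 0 \<and> k = 0 then 2*d*e*f
    else if (i = 0 \<and> k = 1) \<or> (i = 1 \<and> k = 0) then - c*d*f - b*e*f + a*f^2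
    else if (i = 0 \<and> k = 2) \<or> (i = 2 \<and> k = 0) then - c*d*e + b*e^2 - a*e*f
    else if (i = 0 \<and> k = 3) \<or> (i = 3 \<and> k = 0) then c*d^2 - b*d*e - a*d*f
    else if i = 1 \<and> k = 1 then 2*b*c*f
    else if (i = 1 \<and> k = 2) \<or> (i = 2 \<and> k = 1) then c^2*d - b*c*e - a*c*f
    else if (i = 1 \<and> k = 3) \<or> (i = 3 \<and> k = 1) then - b*c*d + b^2*e - a*b*f
    else if i = 2 \<and> k = 2 then 2*a*c*e
    else if (i = 2 \<and> k = 3) \<or> (i = 3 \<and> k = 2) then - a*c*d - a*b*e + a^2*f
    else 2*a*b*d)"

lemma H4_inj:
  fixes a b c d e f x0 x1 x2 x3 :: complex
  assumes D: "Delta a b c d e f \<noteq> 0"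
    and r0: "a*x1 + b*x2 + c*x3 = 0" and r1: "a*x0 + d*x2 + e*x3 = 0"
    and r2: "b*x0 + d*x1 + f*x3 = 0" and r3: "c*x0 + e*x1 + f*x2 = 0"
  shows "x0 = 0 \<and> x1 = 0 \<and> x2 = 0 \<and> x3 = 0"
proof -
  have e0: "Delta a b c d e f * x0 = adjH a b c d e f 0 0 * (a*x1 + b*x2 + c*x3) + adjH a b c d e f 0 1 * (a*x0 + d*x2 + e*x3)
     + adjH a b c d e f 0 2 * (b*x0 + d*x1 + f*x3) + adjH a b c d e f 0 3 * (c*x0 + e*x1 + f*x2)"
    by (simp add: adjH_def Delta_def power2_eq_square algebra_simps)
  have e1: "Delta a b c d e f * x1 = adjH a b c d e f 1 0 * (a*x1 + b*x2 + c*x3) + adjH a b c d e f 1 1 * (a*x0 + d*x2 + e*x3)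
     + adjH a b c d e f 1 2 * (b*x0 + d*x1 + f*x3) + adjH a b c d e f 1 3 * (c*x0 + e*x1 + f*x2)"
    by (simp add: adjH_def Delta_def power2_eq_square algebra_simps)
  have e2: "Delta a b c d e f * x2 = adjH a b c d e f 2 0 * (a*x1 + b*x2 + c*x3) + adjH a b c d e f 2 1 * (a*x0 + d*x2 + e*x3)
     + adjH a b c d e f 2 2 * (b*x0 + d*x1 + f*x3) + adjH a b c d e f 2 3 * (c*x0 + e*x1 + f*x2)"
    by (simp add: adjH_def Delta_def power2_eq_square algebra_simps)
  have e3: "Delta a b c d e f * x3 = adjH a b c d e f 3 0 * (a*x1 + b*x2 + c*x3) + adjH a b c d e f 3 1 * (a*x0 + d*x2 + e*x3)
     + adjH a b c d e f 3 2 * (b*x0 + d*x1 + f*x3) + adjH a b c d e f 3 3 * (c*x0 + e*x1 + f*x2)"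
    by (simp add: adjH_def Delta_def power2_eq_square algebra_simps)
  have "Delta a b c d e f * x0 = 0" "Delta a b c d e f * x1 = 0" "Delta a b c d e f * x2 = 0" "Delta a b c d e f * x3 = 0"
    unfolding e0 e1 e2 e3 r0 r1 r2 r3 by simp_all
  then show ?thesis using D by simp
qed

lemma H4_surj:
  fixes a b c d e f g0 g1 g2 g3 :: complex
  assumes D: "Delta a b c d e f \<noteq> 0"
  defines "x \<equiv> \<lambda>i. (adjH a b c d e f i 0 * g0 + adjH a b c d e f i 1 * g1 + adjH a b c d e f i 2 * g2 + adjH a b c d e f i 3 * g3) / Delta a b c d e f"
  shows "a * x 1 + b * x 2 + c * x 3 = g0" "a * x 0 + d * x 2 + e * x 3 = g1"
    "b * x 0 + d * x 1 + f * x 3 = g2" "c * x 0 + e * x 1 + f * x 2 = g3"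
proof -
  have e0: "a * (adjH a b c d e f 1 0 * g0 + adjH a b c d e f 1 1 * g1 + adjH a b c d e f 1 2 * g2 + adjH a b c d e f 1 3 * g3)
    + b * (adjH a b c d e f 2 0 * g0 + adjH a b c d e f 2 1 * g1 + adjH a b c d e f 2 2 * g2 + adjH a b c d e f 2 3 * g3)
    + c * (adjH a b c d e f 3 0 * g0 + adjH a b c d e f 3 1 * g1 + adjH a b c d e f 3 2 * g2 + adjH a b c d e f 3 3 * g3)
    = Delta a b c d e f * g0"
    by (simp add: adjH_def Delta_def power2_eq_square algebra_simps)
  have e1: "a * (adjH a b c d e f 0 0 * g0 + adjH a b c d e f 0 1 * g1 + adjH a b c d e f 0 2 * g2 + adjH a b c d e f 0 3 * g3)
    + d * (adjH a b c d e f 2 0 * g0 + adjH a b c d e f 2 1 * g1 + adjH a b c d e f 2 2 * g2 + adjH a b c d e f 2 3 * g3)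
    + e * (adjH a b c d e f 3 0 * g0 + adjH a b c d e f 3 1 * g1 + adjH a b c d e f 3 2 * g2 + adjH a b c d e f 3 3 * g3)
    = Delta a b c d e f * g1"
    by (simp add: adjH_def Delta_def power2_eq_square algebra_simps)
  have e2: "b * (adjH a b c d e f 0 0 * g0 + adjH a b c d e f 0 1 * g1 + adjH a b c d e f 0 2 * g2 + adjH a b c d e f 0 3 * g3)
    + d * (adjH a b c d e f 1 0 * g0 + adjH a b c d e f 1 1 * g1 + adjH a b c d e f 1 2 * g2 + adjH a b c d e f 1 3 * g3)
    + f * (adjH a b c d e f 3 0 * g0 + adjH a b c d e f 3 1 * g1 + adjH a b c d e f 3 2 * g2 + adjH a b c d e f 3 3 * g3)
    = Delta a b c d e f * g2"
    by (simp add: adjH_def Delta_def power2_eq_square algebra_simps)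
  have e3: "c * (adjH a b c d e f 0 0 * g0 + adjH a b c d e f 0 1 * g1 + adjH a b c d e f 0 2 * g2 + adjH a b c d e f 0 3 * g3)
    + e * (adjH a b c d e f 1 0 * g0 + adjH a b c d e f 1 1 * g1 + adjH a b c d e f 1 2 * g2 + adjH a b c d e f 1 3 * g3)
    + f * (adjH a b c d e f 2 0 * g0 + adjH a b c d e f 2 1 * g1 + adjH a b c d e f 2 2 * g2 + adjH a b c d e f 2 3 * g3)
    = Delta a b c d e f * g3"
    by (simp add: adjH_def Delta_def power2_eq_square algebra_simps)
  show "a * x 1 + b * x 2 + c * x 3 = g0" using D unfolding x_def by (simp only: times_divide_eq_right add_divide_distrib[symmetric] e0) simp
  show "a * x 0 + d * x 2 + e * x 3 = g1" using D unfolding x_def by (simp only: times_divide_eq_right add_divide_distrib[symmetric] e1) simp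
  show "b * x 0 + d * x 1 + f * x 3 = g2" using D unfolding x_def by (simp only: times_divide_eq_right add_divide_distrib[symmetric] e2) simp
  show "c * x 0 + e * x 1 + f * x 2 = g3" using D unfolding x_def by (simp only: times_divide_eq_right add_divide_distrib[symmetric] e3) simp
qed

lemma Om0_V22: "Om0 b \<in> Vpq 4 2 2"
proof -
  have "(\<lambda>S. wedge (Dstd (b 0 0)) (Dstd (b 1 1)) S - wedge (Dstd (b 0 1)) (Dstd (b 1 0)) S) \<in> Vpq 4 (1 + 1) (1 + 1)"
    by (intro Vpq_diff wedge_Vpq Dstd_V11)
  then show ?thesis unfolding Om0_def det2_def one_add_one .
qed

lemma ebas_in_Vpq: "S \<subseteq> {..<2*n} \<Longrightarrow> card (S \<inter> {..<n}) = p \<Longrightarrow> card (S \<inter> {n..<2*n}) = q \<Longrightarrow> ebas S \<in> Vpq n p q"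
  by (auto simp: Vpq_def ebas_def)

lemma Vpq_sum_list:
  "(\<forall>x\<in>set xs. ebas (fst x) \<in> Vpq n p q) \<Longrightarrow> (\<lambda>T. sum_list (map (\<lambda>x. snd x * ebas (fst x) T) xs)) \<in> Vpq n p q"
proof (induct xs)
  case Nil then show ?case by simp
next
  case (Cons x xs)
  then have "(\<lambda>T. snd x * ebas (fst x) T + sum_list (map (\<lambda>x. snd x * ebas (fst x) T) xs)) \<in> Vpq n p q"
    by (intro Vpq_add Vpq_scale) auto
  then show ?case by simp
qed

lemma bij_wedge:
  assumes maps: "\<forall>\<beta>\<in>Vpq n p q. wedge \<beta> \<Omega> \<in> Vpq n p' q'"
    and inj: "\<forall>\<delta>\<in>Vpq n p q. (\<forall>S. wedge \<delta> \<Omega> S = 0) \<longrightarrow> (\<forall>T. \<delta> T = 0)"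
    and surj: "\<forall>\<gamma>\<in>Vpq n p' q'. \<exists>\<beta>\<in>Vpq n p q. wedge \<beta> \<Omega> = \<gamma>"
  shows "bij_betw (\<lambda>\<alpha>. wedge \<alpha> \<Omega>) (Vpq n p q) (Vpq n p' q')"
  unfolding bij_betw_def
proof (intro conjI)
  show "inj_on (\<lambda>\<alpha>. wedge \<alpha> \<Omega>) (Vpq n p q)"
  proof (rule inj_onI)
    fix x y assume x: "x \<in> Vpq n p q" and y: "y \<in> Vpq n p q" and e: "wedge x \<Omega> = wedge y \<Omega>"
    have d: "(\<lambda>S. x S - y S) \<in> Vpq n p q" by (rule Vpq_diff[OF x y])
    have "\<forall>S. wedge (\<lambda>S. x S - y S) \<Omega> S = 0" using e by (simp add: wedge_diffl)
    then have "\<forall>T. x T - y T = 0" using inj d by blast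
    then show "x = y" by (simp add: fun_eq_iff)
  qed
  show "(\<lambda>\<alpha>. wedge \<alpha> \<Omega>) ` Vpq n p q = Vpq n p' q'"
  proof (intro equalityI subsetI)
    fix y assume "y \<in> (\<lambda>\<alpha>. wedge \<alpha> \<Omega>) ` Vpq n p q"
    then obtain x where "x \<in> Vpq n p q" "y = wedge x \<Omega>" by auto
    then show "y \<in> Vpq n p' q'" using maps by simp
  next
    fix y assume "y \<in> Vpq n p' q'"
    then obtain x where "x \<in> Vpq n p q" "wedge x \<Omega> = y" using surj by blast
    then show "y \<in> (\<lambda>\<alpha>. wedge \<alpha> \<Omega>) ` Vpq n p q" by (auto intro: image_eqI)
  qed
qed

lemma inj_20:
  assumes d: "\<delta> \<in> Vpq 4 2 0" and z: "\<forall>S. wedge \<delta> (Om0 b) S = 0"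
    and nz: "cco b 0 1 \<noteq> 0" "cco b 0 2 \<noteq> 0" "cco b 0 3 \<noteq> 0" "cco b 1 2 \<noteq> 0" "cco b 1 3 \<noteq> 0" "cco b 2 3 \<noteq> 0"
  shows "\<delta> T = 0"
proof (rule ccontr)
  assume T: "\<delta> T \<noteq> 0"
  then have "T \<subseteq> {..<8}" "card (T \<inter> {..<4}) = 2" "card (T \<inter> {4..<8}) = 0" using d by (auto simp: Vpq_def)
  note en = enum_20[OF this]
  have z0: "\<delta> {2, 3} = 0" using L0_20_0[of \<delta> b] z[rule_format, of "{0, 1, 2, 3, 4, 5}"] nz by simp
  have z1: "\<delta> {1, 3} = 0" using L0_20_1[of \<delta> b] z[rule_format, of "{0, 1, 2, 3, 4, 6}"] nz by simp
  have z2: "\<delta> {1, 2} = 0" using L0_20_2[of \<delta> b] z[rule_format, of "{0, 1, 2, 3, 4, 7}"] nz by simp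
  have z3: "\<delta> {0, 3} = 0" using L0_20_3[of \<delta> b] z[rule_format, of "{0, 1, 2, 3, 5, 6}"] nz by simp
  have z4: "\<delta> {0, 2} = 0" using L0_20_4[of \<delta> b] z[rule_format, of "{0, 1, 2, 3, 5, 7}"] nz by simp
  have z5: "\<delta> {0, 1} = 0" using L0_20_5[of \<delta> b] z[rule_format, of "{0, 1, 2, 3, 6, 7}"] nz by simp
  show False using en T z0 z1 z2 z3 z4 z5 by (elim disjE) simp_all
qed

lemma surj_20:
  assumes g: "\<gamma> \<in> Vpq 4 4 2"
    and nz: "cco b 0 1 \<noteq> 0" "cco b 0 2 \<noteq> 0" "cco b 0 3 \<noteq> 0" "cco b 1 2 \<noteq> 0" "cco b 1 3 \<noteq> 0" "cco b 2 3 \<noteq> 0"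
  shows "\<exists>\<beta>\<in>Vpq 4 2 0. wedge \<beta> (Om0 b) = \<gamma>"
proof
  define \<beta> where "\<beta> = (\<lambda>T. sum_list (map (\<lambda>x. snd x * ebas (fst x) T) [({2, 3}, \<gamma> {0, 1, 2, 3, 4, 5} / cco b 0 1), ({1, 3}, - \<gamma> {0, 1, 2, 3, 4, 6} / cco b 0 2), ({1, 2}, \<gamma> {0, 1, 2, 3, 4, 7} / cco b 0 3), ({0, 3}, \<gamma> {0, 1, 2, 3, 5, 6} / cco b 1 2), ({0, 2}, - \<gamma> {0, 1, 2, 3, 5, 7} / cco b 1 3), ({0, 1}, \<gamma> {0, 1, 2, 3, 6, 7} / cco b 2 3)]))"
  show bV: "\<beta> \<in> Vpq 4 2 0" unfolding \<beta>_def by (rule Vpq_sum_list) (simp add: ebas_in_Vpq)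
  have bv0: "\<beta> {2, 3} = \<gamma> {0, 1, 2, 3, 4, 5} / cco b 0 1" unfolding \<beta>_def by (simp add: ebas_def set_eq_subset)
  have bv1: "\<beta> {1, 3} = - \<gamma> {0, 1, 2, 3, 4, 6} / cco b 0 2" unfolding \<beta>_def by (simp add: ebas_def set_eq_subset)
  have bv2: "\<beta> {1, 2} = \<gamma> {0, 1, 2, 3, 4, 7} / cco b 0 3" unfolding \<beta>_def by (simp add: ebas_def set_eq_subset)
  have bv3: "\<beta> {0, 3} = \<gamma> {0, 1, 2, 3, 5, 6} / cco b 1 2" unfolding \<beta>_def by (simp add: ebas_def set_eq_subset)
  have bv4: "\<beta> {0, 2} = - \<gamma> {0, 1, 2, 3, 5, 7} / cco b 1 3" unfolding \<beta>_def by (simp add: ebas_def set_eq_subset)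
  have bv5: "\<beta> {0, 1} = \<gamma> {0, 1, 2, 3, 6, 7} / cco b 2 3" unfolding \<beta>_def by (simp add: ebas_def set_eq_subset)
  have t0: "wedge \<beta> (Om0 b) {0, 1, 2, 3, 4, 5} = \<gamma> {0, 1, 2, 3, 4, 5}" unfolding L0_20_0 bv0 bv1 bv2 bv3 bv4 bv5 using nz by simp
  have t1: "wedge \<beta> (Om0 b) {0, 1, 2, 3, 4, 6} = \<gamma> {0, 1, 2, 3, 4, 6}" unfolding L0_20_1 bv0 bv1 bv2 bv3 bv4 bv5 using nz by simp
  have t2: "wedge \<beta> (Om0 b) {0, 1, 2, 3, 4, 7} = \<gamma> {0, 1, 2, 3, 4, 7}" unfolding L0_20_2 bv0 bv1 bv2 bv3 bv4 bv5 using nz by simp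
  have t3: "wedge \<beta> (Om0 b) {0, 1, 2, 3, 5, 6} = \<gamma> {0, 1, 2, 3, 5, 6}" unfolding L0_20_3 bv0 bv1 bv2 bv3 bv4 bv5 using nz by simp
  have t4: "wedge \<beta> (Om0 b) {0, 1, 2, 3, 5, 7} = \<gamma> {0, 1, 2, 3, 5, 7}" unfolding L0_20_4 bv0 bv1 bv2 bv3 bv4 bv5 using nz by simp
  have t5: "wedge \<beta> (Om0 b) {0, 1, 2, 3, 6, 7} = \<gamma> {0, 1, 2, 3, 6, 7}" unfolding L0_20_5 bv0 bv1 bv2 bv3 bv4 bv5 using nz by simp
  show "wedge \<beta> (Om0 b) = \<gamma>"
  proof
    fix S
    show "wedge \<beta> (Om0 b) S = \<gamma> S"
    proof (cases "S \<subseteq> {..<8} \<and> card (S \<inter> {..<4}) = 4 \<and> card (S \<inter> {4..<8}) = 2")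
      case True
      from True have "S \<subseteq> {..<8}" "card (S \<inter> {..<4}) = 4" "card (S \<inter> {4..<8}) = 2" by auto
      from enum_42[OF this] show ?thesis using t0 t1 t2 t3 t4 t5 by (elim disjE) simp_all
    next
      case False
      have w: "wedge \<beta> (Om0 b) \<in> Vpq 4 (2 + 2) (0 + 2)" by (rule wedge_Vpq[OF bV Om0_V22])
      have "wedge \<beta> (Om0 b) S = 0" using w False by (auto simp: Vpq_def)
      moreover have "\<gamma> S = 0" using g False by (auto simp: Vpq_def)
      ultimately show ?thesis by simp
    qed
  qed
qed

lemma inj_11:
  assumes d: "\<delta> \<in> Vpq 4 1 1" and z: "\<forall>S. wedge \<delta> (Om0 b) S = 0"
    and nz: "cco b 0 1 \<noteq> 0" "cco b 0 2 \<noteq> 0" "cco b 0 3 \<noteq> 0" "cco b 1 2 \<noteq> 0" "cco b 1 3 \<noteq> 0" "cco b 2 3 \<noteq> 0"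
    and D: "Delta (cco b 2 3) (cco b 1 3) (cco b 1 2) (cco b 0 3) (cco b 0 2) (cco b 0 1) \<noteq> 0"
  shows "\<delta> T = 0"
proof (rule ccontr)
  assume T: "\<delta> T \<noteq> 0"
  then have "T \<subseteq> {..<8}" "card (T \<inter> {..<4}) = 1" "card (T \<inter> {4..<8}) = 1" using d by (auto simp: Vpq_def)
  note en = enum_11[OF this]
  have z1: "\<delta> {2, 7} = 0" using L0_11_1[of \<delta> b] z[rule_format, of "{0, 1, 2, 4, 5, 7}"] nz by simp
  have z2: "\<delta> {1, 7} = 0" using L0_11_2[of \<delta> b] z[rule_format, of "{0, 1, 2, 4, 6, 7}"] nz by simp
  have z3: "\<delta> {0, 7} = 0" using L0_11_3[of \<delta> b] z[rule_format, of "{0, 1, 2, 5, 6, 7}"] nz by simp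
  have z4: "\<delta> {3, 6} = 0" using L0_11_4[of \<delta> b] z[rule_format, of "{0, 1, 3, 4, 5, 6}"] nz by simp
  have z6: "\<delta> {1, 6} = 0" using L0_11_6[of \<delta> b] z[rule_format, of "{0, 1, 3, 4, 6, 7}"] nz by simp
  have z7: "\<delta> {0, 6} = 0" using L0_11_7[of \<delta> b] z[rule_format, of "{0, 1, 3, 5, 6, 7}"] nz by simp
  have z8: "\<delta> {3, 5} = 0" using L0_11_8[of \<delta> b] z[rule_format, of "{0, 2, 3, 4, 5, 6}"] nz by simp
  have z9: "\<delta> {2, 5} = 0" using L0_11_9[of \<delta> b] z[rule_format, of "{0, 2, 3, 4, 5, 7}"] nz by simp
  have z11: "\<delta> {0, 5} = 0" using L0_11_11[of \<delta> b] z[rule_format, of "{0, 2, 3, 5, 6, 7}"] nz by simp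
  have z12: "\<delta> {3, 4} = 0" using L0_11_12[of \<delta> b] z[rule_format, of "{1, 2, 3, 4, 5, 6}"] nz by simp
  have z13: "\<delta> {2, 4} = 0" using L0_11_13[of \<delta> b] z[rule_format, of "{1, 2, 3, 4, 5, 7}"] nz by simp
  have z14: "\<delta> {1, 4} = 0" using L0_11_14[of \<delta> b] z[rule_format, of "{1, 2, 3, 4, 6, 7}"] nz by simp
  have r0: "cco b 2 3 * \<delta> {1, 5} + cco b 1 3 * \<delta> {2, 6} + cco b 1 2 * \<delta> {3, 7} = 0" using L0_11_15[of \<delta> b] z[rule_format, of "{1, 2, 3, 5, 6, 7}"] by (simp add: algebra_simps)
  have r1: "cco b 2 3 * \<delta> {0, 4} + cco b 0 3 * \<delta> {2, 6} + cco b 0 2 * \<delta> {3, 7} = 0" using L0_11_10[of \<delta> b] z[rule_format, of "{0, 2, 3, 4, 6, 7}"] by (simp add: algebra_simps)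
  have r2: "cco b 1 3 * \<delta> {0, 4} + cco b 0 3 * \<delta> {1, 5} + cco b 0 1 * \<delta> {3, 7} = 0" using L0_11_5[of \<delta> b] z[rule_format, of "{0, 1, 3, 4, 5, 7}"] by (simp add: algebra_simps)
  have r3: "cco b 1 2 * \<delta> {0, 4} + cco b 0 2 * \<delta> {1, 5} + cco b 0 1 * \<delta> {2, 6} = 0" using L0_11_0[of \<delta> b] z[rule_format, of "{0, 1, 2, 4, 5, 6}"] by (simp add: algebra_simps)
  have zd: "\<delta> {0, 4} = 0 \<and> \<delta> {1, 5} = 0 \<and> \<delta> {2, 6} = 0 \<and> \<delta> {3, 7} = 0"
    by (rule H4_inj[OF D r0 r1 r2 r3])
  show False using en T z1 z2 z3 z4 z6 z7 z8 z9 z11 z12 z13 z14 zd by (elim disjE) simp_all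
qed

lemma surj_11:
  assumes g: "\<gamma> \<in> Vpq 4 3 3"
    and nz: "cco b 0 1 \<noteq> 0" "cco b 0 2 \<noteq> 0" "cco b 0 3 \<noteq> 0" "cco b 1 2 \<noteq> 0" "cco b 1 3 \<noteq> 0" "cco b 2 3 \<noteq> 0"
    and D: "Delta (cco b 2 3) (cco b 1 3) (cco b 1 2) (cco b 0 3) (cco b 0 2) (cco b 0 1) \<noteq> 0"
  shows "\<exists>\<beta>\<in>Vpq 4 1 1. wedge \<beta> (Om0 b) = \<gamma>"
proof
  define \<beta> where "\<beta> = (\<lambda>T. sum_list (map (\<lambda>x. snd x * ebas (fst x) T) [({2, 7}, \<gamma> {0, 1, 2, 4, 5, 7} / cco b 0 1), ({1, 7}, - \<gamma> {0, 1, 2, 4, 6, 7} / cco b 0 2), ({0, 7}, \<gamma> {0, 1, 2, 5, 6, 7} / cco b 1 2), ({3, 6}, \<gamma> {0, 1, 3, 4, 5, 6} / cco b 0 1), ({1, 6}, \<gamma> {0, 1, 3, 4, 6, 7} / cco b 0 3), ({0, 6}, - \<gamma> {0, 1, 3, 5, 6, 7} / cco b 1 3), ({3, 5}, - \<gamma> {0, 2, 3, 4, 5, 6} / cco b 0 2), ({2, 5}, \<gamma> {0, 2, 3, 4, 5, 7} / cco b 0 3), ({0, 5}, \<gamma> {0, 2, 3, 5, 6, 7} / cco b 2 3), ({3, 4}, \<gamma> {1, 2, 3, 4, 5, 6} / cco b 1 2), ({2, 4}, - \<gamma> {1, 2, 3, 4, 5, 7} / cco b 1 3), ({1, 4}, \<gamma>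 {1, 2, 3, 4, 6, 7} / cco b 2 3), ({0, 4}, (adjH (cco b 2 3) (cco b 1 3) (cco b 1 2) (cco b 0 3) (cco b 0 2) (cco b 0 1) 0 0 * \<gamma> {1, 2, 3, 5, 6, 7} + adjH (cco b 2 3) (cco b 1 3) (cco b 1 2) (cco b 0 3) (cco b 0 2) (cco b 0 1) 0 1 * \<gamma> {0, 2, 3, 4, 6, 7} + adjH (cco b 2 3) (cco b 1 3) (cco b 1 2) (cco b 0 3) (cco b 0 2) (cco b 0 1) 0 2 * \<gamma> {0, 1, 3, 4, 5, 7} + adjH (cco b 2 3) (cco b 1 3) (cco b 1 2) (cco b 0 3) (cco b 0 2) (cco b 0 1) 0 3 * \<gamma> {0, 1, 2, 4, 5, 6}) / Delta (cco b 2 3) (cco b 1 3) (cco b 1 2) (cco b 0 3) (cco b 0 2) (cco b 0 1)), ({1, 5}, (adjH (cco b 2 3) (cco b 1 3) (cco b 1 2) (cco b 0 3) (cco b 0 2) (cco b 0 1) 1 0 * \<gamma> {1, 2, 3, 5, 6, 7} + adjH (cco b 2 3) (cco b 1 3) (cco b 1 2) (cco b 0 3) (cco b 0 2) (cco b 0 1) 1 1 * \<gamma> {0, 2, 3, 4, 6, 7} + adjH (cco b 2 3) (cco b 1 3) (cco b 1 2) (cco b 0 3) (cco b 0 2) (cco b 0 1) 1 2 * \<gamma> {0, 1, 3, 4, 5, 7} + adjH (cco b 2 3) (cco b 1 3) (cco b 1 2) (cco b 0 3) (cco b 0 2) (cco b 0 1) 1 3 * \<gamma> {0, 1, 2, 4,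 5, 6}) / Delta (cco b 2 3) (cco b 1 3) (cco b 1 2) (cco b 0 3) (cco b 0 2) (cco b 0 1)), ({2, 6}, (adjH (cco b 2 3) (cco b 1 3) (cco b 1 2) (cco b 0 3) (cco b 0 2) (cco b 0 1) 2 0 * \<gamma> {1, 2, 3, 5, 6, 7} + adjH (cco b 2 3) (cco b 1 3) (cco b 1 2) (cco b 0 3) (cco b 0 2) (cco b 0 1) 2 1 * \<gamma> {0, 2, 3, 4, 6, 7} + adjH (cco b 2 3) (cco b 1 3) (cco b 1 2) (cco b 0 3) (cco b 0 2) (cco b 0 1) 2 2 * \<gamma> {0, 1, 3, 4, 5, 7} + adjH (cco b 2 3) (cco b 1 3) (cco b 1 2) (cco b 0 3) (cco b 0 2) (cco b 0 1) 2 3 * \<gamma> {0, 1, 2, 4, 5, 6}) / Delta (cco b 2 3) (cco b 1 3) (cco b 1 2) (cco b 0 3) (cco b 0 2) (cco b 0 1)), ({3, 7}, (adjH (cco b 2 3) (cco b 1 3) (cco b 1 2) (cco b 0 3) (cco b 0 2) (cco b 0 1) 3 0 * \<gamma> {1, 2, 3, 5, 6, 7} + adjH (cco b 2 3) (cco b 1 3) (cco b 1 2) (cco b 0 3) (cco b 0 2) (cco b 0 1) 3 1 * \<gamma> {0, 2, 3, 4, 6, 7} + adjH (cco b 2 3) (cco b 1 3) (cco b 1 2) (cco b 0 3) (cco b 0 2) (cco b 0 1) 3 2 * \<gamma> {0, 1, 3, 4, 5, 7} + adjH (cco b 2 3) (cco b 1 3) (cco b 1 2) (cco b 0 3) (cco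 b 0 2) (cco b 0 1) 3 3 * \<gamma> {0, 1, 2, 4, 5, 6}) / Delta (cco b 2 3) (cco b 1 3) (cco b 1 2) (cco b 0 3) (cco b 0 2) (cco b 0 1))]))"
  show bV: "\<beta> \<in> Vpq 4 1 1" unfolding \<beta>_def by (rule Vpq_sum_list) (simp add: ebas_in_Vpq)
  have bv0: "\<beta> {2, 7} = \<gamma> {0, 1, 2, 4, 5, 7} / cco b 0 1" unfolding \<beta>_def by (simp add: ebas_def set_eq_subset)
  have bv1: "\<beta> {1, 7} = - \<gamma> {0, 1, 2, 4, 6, 7} / cco b 0 2" unfolding \<beta>_def by (simp add: ebas_def set_eq_subset)
  have bv2: "\<beta> {0, 7} = \<gamma> {0, 1, 2, 5, 6, 7} / cco b 1 2" unfolding \<beta>_def by (simp add: ebas_def set_eq_subset)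
  have bv3: "\<beta> {3, 6} = \<gamma> {0, 1, 3, 4, 5, 6} / cco b 0 1" unfolding \<beta>_def by (simp add: ebas_def set_eq_subset)
  have bv4: "\<beta> {1, 6} = \<gamma> {0, 1, 3, 4, 6, 7} / cco b 0 3" unfolding \<beta>_def by (simp add: ebas_def set_eq_subset)
  have bv5: "\<beta> {0, 6} = - \<gamma> {0, 1, 3, 5, 6, 7} / cco b 1 3" unfolding \<beta>_def by (simp add: ebas_def set_eq_subset)
  have bv6: "\<beta> {3, 5} = - \<gamma> {0, 2, 3, 4, 5, 6} / cco b 0 2" unfolding \<beta>_def by (simp add: ebas_def set_eq_subset)
  have bv7: "\<beta> {2, 5} = \<gamma> {0, 2, 3, 4, 5, 7} / cco b 0 3" unfolding \<beta>_def by (simp add: ebas_def set_eq_subset)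
  have bv8: "\<beta> {0, 5} = \<gamma> {0, 2, 3, 5, 6, 7} / cco b 2 3" unfolding \<beta>_def by (simp add: ebas_def set_eq_subset)
  have bv9: "\<beta> {3, 4} = \<gamma> {1, 2, 3, 4, 5, 6} / cco b 1 2" unfolding \<beta>_def by (simp add: ebas_def set_eq_subset)
  have bv10: "\<beta> {2, 4} = - \<gamma> {1, 2, 3, 4, 5, 7} / cco b 1 3" unfolding \<beta>_def by (simp add: ebas_def set_eq_subset)
  have bv11: "\<beta> {1, 4} = \<gamma> {1, 2, 3, 4, 6, 7} / cco b 2 3" unfolding \<beta>_def by (simp add: ebas_def set_eq_subset)
  have bv12: "\<beta> {0, 4} = (adjH (cco b 2 3) (cco b 1 3) (cco b 1 2) (cco b 0 3) (cco b 0 2) (cco b 0 1) 0 0 * \<gamma> {1, 2, 3, 5, 6, 7} + adjH (cco b 2 3) (cco b 1 3) (cco b 1 2) (cco b 0 3) (cco b 0 2) (cco b 0 1) 0 1 * \<gamma> {0, 2, 3, 4, 6, 7} + adjH (cco b 2 3) (cco b 1 3) (cco b 1 2) (cco b 0 3) (cco b 0 2) (cco b 0 1) 0 2 * \<gamma> {0, 1, 3, 4, 5, 7} + adjH (cco b 2 3) (cco b 1 3) (cco b 1 2) (cco b 0 3) (cco b 0 2) (cco b 0 1) 0 3 * \<gamma> {0, 1, 2, 4, 5, 6}) / Delta (cco b 2 3) (cco b 1 3) (cco b 1 2) (cco b 0 3) (cco b 0 2) (cco b 0 1)" unfolding \<beta>_def by (simp add: ebas_def set_eq_subset)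
  have bv13: "\<beta> {1, 5} = (adjH (cco b 2 3) (cco b 1 3) (cco b 1 2) (cco b 0 3) (cco b 0 2) (cco b 0 1) 1 0 * \<gamma> {1, 2, 3, 5, 6, 7} + adjH (cco b 2 3) (cco b 1 3) (cco b 1 2) (cco b 0 3) (cco b 0 2) (cco b 0 1) 1 1 * \<gamma> {0, 2, 3, 4, 6, 7} + adjH (cco b 2 3) (cco b 1 3) (cco b 1 2) (cco b 0 3) (cco b 0 2) (cco b 0 1) 1 2 * \<gamma> {0, 1, 3, 4, 5, 7} + adjH (cco b 2 3) (cco b 1 3) (cco b 1 2) (cco b 0 3) (cco b 0 2) (cco b 0 1) 1 3 * \<gamma> {0, 1, 2, 4, 5, 6}) / Delta (cco b 2 3) (cco b 1 3) (cco b 1 2) (cco b 0 3) (cco b 0 2) (cco b 0 1)" unfolding \<beta>_def by (simp add: ebas_def set_eq_subset)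
  have bv14: "\<beta> {2, 6} = (adjH (cco b 2 3) (cco b 1 3) (cco b 1 2) (cco b 0 3) (cco b 0 2) (cco b 0 1) 2 0 * \<gamma> {1, 2, 3, 5, 6, 7} + adjH (cco b 2 3) (cco b 1 3) (cco b 1 2) (cco b 0 3) (cco b 0 2) (cco b 0 1) 2 1 * \<gamma> {0, 2, 3, 4, 6, 7} + adjH (cco b 2 3) (cco b 1 3) (cco b 1 2) (cco b 0 3) (cco b 0 2) (cco b 0 1) 2 2 * \<gamma> {0, 1, 3, 4, 5, 7} + adjH (cco b 2 3) (cco b 1 3) (cco b 1 2) (cco b 0 3) (cco b 0 2) (cco b 0 1) 2 3 * \<gamma> {0, 1, 2, 4, 5, 6}) / Delta (cco b 2 3) (cco b 1 3) (cco b 1 2) (cco b 0 3) (cco b 0 2) (cco b 0 1)" unfolding \<beta>_def by (simp add: ebas_def set_eq_subset)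
  have bv15: "\<beta> {3, 7} = (adjH (cco b 2 3) (cco b 1 3) (cco b 1 2) (cco b 0 3) (cco b 0 2) (cco b 0 1) 3 0 * \<gamma> {1, 2, 3, 5, 6, 7} + adjH (cco b 2 3) (cco b 1 3) (cco b 1 2) (cco b 0 3) (cco b 0 2) (cco b 0 1) 3 1 * \<gamma> {0, 2, 3, 4, 6, 7} + adjH (cco b 2 3) (cco b 1 3) (cco b 1 2) (cco b 0 3) (cco b 0 2) (cco b 0 1) 3 2 * \<gamma> {0, 1, 3, 4, 5, 7} + adjH (cco b 2 3) (cco b 1 3) (cco b 1 2) (cco b 0 3) (cco b 0 2) (cco b 0 1) 3 3 * \<gamma> {0, 1, 2, 4, 5, 6}) / Delta (cco b 2 3) (cco b 1 3) (cco b 1 2) (cco b 0 3) (cco b 0 2) (cco b 0 1)" unfolding \<beta>_def by (simp add: ebas_def set_eq_subset)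
  have t1: "wedge \<beta> (Om0 b) {0, 1, 2, 4, 5, 7} = \<gamma> {0, 1, 2, 4, 5, 7}" unfolding L0_11_1 bv0 bv1 bv2 bv3 bv4 bv5 bv6 bv7 bv8 bv9 bv10 bv11 bv12 bv13 bv14 bv15 using nz by simp
  have t2: "wedge \<beta> (Om0 b) {0, 1, 2, 4, 6, 7} = \<gamma> {0, 1, 2, 4, 6, 7}" unfolding L0_11_2 bv0 bv1 bv2 bv3 bv4 bv5 bv6 bv7 bv8 bv9 bv10 bv11 bv12 bv13 bv14 bv15 using nz by simp
  have t3: "wedge \<beta> (Om0 b) {0, 1, 2, 5, 6, 7} = \<gamma> {0, 1, 2, 5, 6, 7}" unfolding L0_11_3 bv0 bv1 bv2 bv3 bv4 bv5 bv6 bv7 bv8 bv9 bv10 bv11 bv12 bv13 bv14 bv15 using nz by simp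
  have t4: "wedge \<beta> (Om0 b) {0, 1, 3, 4, 5, 6} = \<gamma> {0, 1, 3, 4, 5, 6}" unfolding L0_11_4 bv0 bv1 bv2 bv3 bv4 bv5 bv6 bv7 bv8 bv9 bv10 bv11 bv12 bv13 bv14 bv15 using nz by simp
  have t6: "wedge \<beta> (Om0 b) {0, 1, 3, 4, 6, 7} = \<gamma> {0, 1, 3, 4, 6, 7}" unfolding L0_11_6 bv0 bv1 bv2 bv3 bv4 bv5 bv6 bv7 bv8 bv9 bv10 bv11 bv12 bv13 bv14 bv15 using nz by simp
  have t7: "wedge \<beta> (Om0 b) {0, 1, 3, 5, 6, 7} = \<gamma> {0, 1, 3, 5, 6, 7}" unfolding L0_11_7 bv0 bv1 bv2 bv3 bv4 bv5 bv6 bv7 bv8 bv9 bv10 bv11 bv12 bv13 bv14 bv15 using nz by simp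
  have t8: "wedge \<beta> (Om0 b) {0, 2, 3, 4, 5, 6} = \<gamma> {0, 2, 3, 4, 5, 6}" unfolding L0_11_8 bv0 bv1 bv2 bv3 bv4 bv5 bv6 bv7 bv8 bv9 bv10 bv11 bv12 bv13 bv14 bv15 using nz by simp
  have t9: "wedge \<beta> (Om0 b) {0, 2, 3, 4, 5, 7} = \<gamma> {0, 2, 3, 4, 5, 7}" unfolding L0_11_9 bv0 bv1 bv2 bv3 bv4 bv5 bv6 bv7 bv8 bv9 bv10 bv11 bv12 bv13 bv14 bv15 using nz by simp
  have t11: "wedge \<beta> (Om0 b) {0, 2, 3, 5, 6, 7} = \<gamma> {0, 2, 3, 5, 6, 7}" unfolding L0_11_11 bv0 bv1 bv2 bv3 bv4 bv5 bv6 bv7 bv8 bv9 bv10 bv11 bv12 bv13 bv14 bv15 using nz by simp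
  have t12: "wedge \<beta> (Om0 b) {1, 2, 3, 4, 5, 6} = \<gamma> {1, 2, 3, 4, 5, 6}" unfolding L0_11_12 bv0 bv1 bv2 bv3 bv4 bv5 bv6 bv7 bv8 bv9 bv10 bv11 bv12 bv13 bv14 bv15 using nz by simp
  have t13: "wedge \<beta> (Om0 b) {1, 2, 3, 4, 5, 7} = \<gamma> {1, 2, 3, 4, 5, 7}" unfolding L0_11_13 bv0 bv1 bv2 bv3 bv4 bv5 bv6 bv7 bv8 bv9 bv10 bv11 bv12 bv13 bv14 bv15 using nz by simp
  have t14: "wedge \<beta> (Om0 b) {1, 2, 3, 4, 6, 7} = \<gamma> {1, 2, 3, 4, 6, 7}" unfolding L0_11_14 bv0 bv1 bv2 bv3 bv4 bv5 bv6 bv7 bv8 bv9 bv10 bv11 bv12 bv13 bv14 bv15 using nz by simp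
  have t0: "wedge \<beta> (Om0 b) {0, 1, 2, 4, 5, 6} = \<gamma> {0, 1, 2, 4, 5, 6}" unfolding L0_11_0 bv0 bv1 bv2 bv3 bv4 bv5 bv6 bv7 bv8 bv9 bv10 bv11 bv12 bv13 bv14 bv15
    using H4_surj(4)[OF D, of "\<gamma> {1, 2, 3, 5, 6, 7}" "\<gamma> {0, 2, 3, 4, 6, 7}" "\<gamma> {0, 1, 3, 4, 5, 7}" "\<gamma> {0, 1, 2, 4, 5, 6}"] by (simp add: add_ac mult_ac)
  have t5: "wedge \<beta> (Om0 b) {0, 1, 3, 4, 5, 7} = \<gamma> {0, 1, 3, 4, 5, 7}" unfolding L0_11_5 bv0 bv1 bv2 bv3 bv4 bv5 bv6 bv7 bv8 bv9 bv10 bv11 bv12 bv13 bv14 bv15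
    using H4_surj(3)[OF D, of "\<gamma> {1, 2, 3, 5, 6, 7}" "\<gamma> {0, 2, 3, 4, 6, 7}" "\<gamma> {0, 1, 3, 4, 5, 7}" "\<gamma> {0, 1, 2, 4, 5, 6}"] by (simp add: add_ac mult_ac)
  have t10: "wedge \<beta> (Om0 b) {0, 2, 3, 4, 6, 7} = \<gamma> {0, 2, 3, 4, 6, 7}" unfolding L0_11_10 bv0 bv1 bv2 bv3 bv4 bv5 bv6 bv7 bv8 bv9 bv10 bv11 bv12 bv13 bv14 bv15
    using H4_surj(2)[OF D, of "\<gamma> {1, 2, 3, 5, 6, 7}" "\<gamma> {0, 2, 3, 4, 6, 7}" "\<gamma> {0, 1, 3, 4, 5, 7}" "\<gamma> {0, 1, 2, 4, 5, 6}"] by (simp add: add_ac mult_ac)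
  have t15: "wedge \<beta> (Om0 b) {1, 2, 3, 5, 6, 7} = \<gamma> {1, 2, 3, 5, 6, 7}" unfolding L0_11_15 bv0 bv1 bv2 bv3 bv4 bv5 bv6 bv7 bv8 bv9 bv10 bv11 bv12 bv13 bv14 bv15
    using H4_surj(1)[OF D, of "\<gamma> {1, 2, 3, 5, 6, 7}" "\<gamma> {0, 2, 3, 4, 6, 7}" "\<gamma> {0, 1, 3, 4, 5, 7}" "\<gamma> {0, 1, 2, 4, 5, 6}"] by (simp add: add_ac mult_ac)
  show "wedge \<beta> (Om0 b) = \<gamma>"
  proof
    fix S
    show "wedge \<beta> (Om0 b) S = \<gamma> S"
    proof (cases "S \<subseteq> {..<8} \<and> card (S \<inter> {..<4}) = 3 \<and> card (S \<inter> {4..<8}) = 3")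
      case True
      from True have "S \<subseteq> {..<8}" "card (S \<inter> {..<4}) = 3" "card (S \<inter> {4..<8}) = 3" by auto
      from enum_33[OF this] show ?thesis using t0 t1 t2 t3 t4 t5 t6 t7 t8 t9 t10 t11 t12 t13 t14 t15 by (elim disjE) simp_all
    next
      case False
      have w: "wedge \<beta> (Om0 b) \<in> Vpq 4 (1 + 2) (1 + 2)" by (rule wedge_Vpq[OF bV Om0_V22])
      have "wedge \<beta> (Om0 b) S = 0" using w False by (auto simp: Vpq_def)
      moreover have "\<gamma> S = 0" using g False by (auto simp: Vpq_def)
      ultimately show ?thesis by simp
    qed
  qed
qed

lemma inj_02:
  assumes d: "\<delta> \<in> Vpq 4 0 2" and z: "\<forall>S. wedge \<delta> (Om0 b) S = 0"
    and nz: "cco b 0 1 \<noteq> 0" "cco b 0 2 \<noteq> 0" "cco b 0 3 \<noteq> 0" "cco b 1 2 \<noteq> 0" "cco b 1 3 \<noteq> 0" "cco b 2 3 \<noteq> 0"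
  shows "\<delta> T = 0"
proof (rule ccontr)
  assume T: "\<delta> T \<noteq> 0"
  then have "T \<subseteq> {..<8}" "card (T \<inter> {..<4}) = 0" "card (T \<inter> {4..<8}) = 2" using d by (auto simp: Vpq_def)
  note en = enum_02[OF this]
  have z0: "\<delta> {6, 7} = 0" using L0_02_0[of \<delta> b] z[rule_format, of "{0, 1, 4, 5, 6, 7}"] nz by simp
  have z1: "\<delta> {5, 7} = 0" using L0_02_1[of \<delta> b] z[rule_format, of "{0, 2, 4, 5, 6, 7}"] nz by simp
  have z2: "\<delta> {5, 6} = 0" using L0_02_2[of \<delta> b] z[rule_format, of "{0, 3, 4, 5, 6, 7}"] nz by simp
  have z3: "\<delta> {4, 7} = 0" using L0_02_3[of \<delta> b] z[rule_format, of "{1, 2, 4, 5, 6, 7}"] nz by simp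
  have z4: "\<delta> {4, 6} = 0" using L0_02_4[of \<delta> b] z[rule_format, of "{1, 3, 4, 5, 6, 7}"] nz by simp
  have z5: "\<delta> {4, 5} = 0" using L0_02_5[of \<delta> b] z[rule_format, of "{2, 3, 4, 5, 6, 7}"] nz by simp
  show False using en T z0 z1 z2 z3 z4 z5 by (elim disjE) simp_all
qed

lemma surj_02:
  assumes g: "\<gamma> \<in> Vpq 4 2 4"
    and nz: "cco b 0 1 \<noteq> 0" "cco b 0 2 \<noteq> 0" "cco b 0 3 \<noteq> 0" "cco b 1 2 \<noteq> 0" "cco b 1 3 \<noteq> 0" "cco b 2 3 \<noteq> 0"
  shows "\<exists>\<beta>\<in>Vpq 4 0 2. wedge \<beta> (Om0 b) = \<gamma>"
proof
  define \<beta> where "\<beta> = (\<lambda>T. sum_list (map (\<lambda>x. snd x * ebas (fst x) T) [({6, 7}, \<gamma> {0, 1, 4, 5, 6, 7} / cco b 0 1), ({5, 7}, - \<gamma> {0, 2, 4, 5, 6, 7} / cco b 0 2), ({5, 6}, \<gamma> {0, 3, 4, 5, 6, 7} / cco b 0 3), ({4, 7}, \<gamma> {1, 2, 4, 5, 6, 7} / cco b 1 2), ({4, 6}, - \<gamma> {1, 3, 4, 5, 6, 7} / cco b 1 3), ({4, 5}, \<gamma> {2, 3, 4, 5, 6, 7} / cco b 2 3)]))"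
  show bV: "\<beta> \<in> Vpq 4 0 2" unfolding \<beta>_def by (rule Vpq_sum_list) (simp add: ebas_in_Vpq)
  have bv0: "\<beta> {6, 7} = \<gamma> {0, 1, 4, 5, 6, 7} / cco b 0 1" unfolding \<beta>_def by (simp add: ebas_def set_eq_subset)
  have bv1: "\<beta> {5, 7} = - \<gamma> {0, 2, 4, 5, 6, 7} / cco b 0 2" unfolding \<beta>_def by (simp add: ebas_def set_eq_subset)
  have bv2: "\<beta> {5, 6} = \<gamma> {0, 3, 4, 5, 6, 7} / cco b 0 3" unfolding \<beta>_def by (simp add: ebas_def set_eq_subset)
  have bv3: "\<beta> {4, 7} = \<gamma> {1, 2, 4, 5, 6, 7} / cco b 1 2" unfolding \<beta>_def by (simp add: ebas_def set_eq_subset)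
  have bv4: "\<beta> {4, 6} = - \<gamma> {1, 3, 4, 5, 6, 7} / cco b 1 3" unfolding \<beta>_def by (simp add: ebas_def set_eq_subset)
  have bv5: "\<beta> {4, 5} = \<gamma> {2, 3, 4, 5, 6, 7} / cco b 2 3" unfolding \<beta>_def by (simp add: ebas_def set_eq_subset)
  have t0: "wedge \<beta> (Om0 b) {0, 1, 4, 5, 6, 7} = \<gamma> {0, 1, 4, 5, 6, 7}" unfolding L0_02_0 bv0 bv1 bv2 bv3 bv4 bv5 using nz by simp
  have t1: "wedge \<beta> (Om0 b) {0, 2, 4, 5, 6, 7} = \<gamma> {0, 2, 4, 5, 6, 7}" unfolding L0_02_1 bv0 bv1 bv2 bv3 bv4 bv5 using nz by simp
  have t2: "wedge \<beta> (Om0 b) {0, 3, 4, 5, 6, 7} = \<gamma> {0, 3, 4, 5, 6, 7}" unfolding L0_02_2 bv0 bv1 bv2 bv3 bv4 bv5 using nz by simp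
  have t3: "wedge \<beta> (Om0 b) {1, 2, 4, 5, 6, 7} = \<gamma> {1, 2, 4, 5, 6, 7}" unfolding L0_02_3 bv0 bv1 bv2 bv3 bv4 bv5 using nz by simp
  have t4: "wedge \<beta> (Om0 b) {1, 3, 4, 5, 6, 7} = \<gamma> {1, 3, 4, 5, 6, 7}" unfolding L0_02_4 bv0 bv1 bv2 bv3 bv4 bv5 using nz by simp
  have t5: "wedge \<beta> (Om0 b) {2, 3, 4, 5, 6, 7} = \<gamma> {2, 3, 4, 5, 6, 7}" unfolding L0_02_5 bv0 bv1 bv2 bv3 bv4 bv5 using nz by simp
  show "wedge \<beta> (Om0 b) = \<gamma>"
  proof
    fix S
    show "wedge \<beta> (Om0 b) S = \<gamma> S"
    proof (cases "S \<subseteq> {..<8} \<and> card (S \<inter> {..<4}) = 2 \<and> card (S \<inter> {4..<8}) = 4")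
      case True
      from True have "S \<subseteq> {..<8}" "card (S \<inter> {..<4}) = 2" "card (S \<inter> {4..<8}) = 4" by auto
      from enum_24[OF this] show ?thesis using t0 t1 t2 t3 t4 t5 by (elim disjE) simp_all
    next
      case False
      have w: "wedge \<beta> (Om0 b) \<in> Vpq 4 (0 + 2) (2 + 2)" by (rule wedge_Vpq[OF bV Om0_V22])
      have "wedge \<beta> (Om0 b) S = 0" using w False by (auto simp: Vpq_def)
      moreover have "\<gamma> S = 0" using g False by (auto simp: Vpq_def)
      ultimately show ?thesis by simp
    qed
  qed
qed

lemma sum2: "(\<Sum>j<2::nat. f j) = f 0 + f 1"
proof -
  have "{..<2::nat} = {0, 1}" by auto
  then show ?thesis by simp
qed

lemma herm_data:
  fixes p q q' r :: complex
  assumes pos: "\<And>a c. a \<noteq> 0 \<or> c \<noteq> 0 \<Longrightarrow> (\<exists>t>0. a * p * cnj a + a * q * cnj c + c * q' * cnj a + c * r * cnj c = complex_of_real t)"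
  shows "\<exists>v :: real \<times> real \<times> real \<times> real. p = complex_of_real (fst v) \<and> r = complex_of_real (fst (snd v))
     \<and> q = Complex (fst (snd (snd v))) (snd (snd (snd v))) \<and> q' = Complex (fst (snd (snd v))) (- snd (snd (snd v)))
     \<and> fst v * fst (snd v) - (fst (snd (snd v)))^2 - (snd (snd (snd v)))^2 > 0"
proof -
  obtain t1 where t1: "t1 > 0" "p = complex_of_real t1" using pos[of 1 0] by auto
  obtain t2 where t2: "t2 > 0" "r = complex_of_real t2" using pos[of 0 1] by auto
  obtain t3 where t3: "p + q + q' + r = complex_of_real t3" using pos[of 1 1] by auto
  obtain t4 where t4: "p + q * cnj \<i> + \<i> * q' + \<i> * r * cnj \<i> = complex_of_real t4" using pos[of 1 \<i>] by auto
  have i3: "Im q + Im q' = 0" using arg_cong[OF t3, of Im] t1 t2 by simp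
  have i4: "Re q' - Re q = 0" using arg_cong[OF t4, of Im] t1 t2 by simp
  define X where "X = Re q"
  define Y where "Y = Im q"
  have q: "q = Complex X Y" unfolding X_def Y_def by simp
  have q': "q' = Complex X (- Y)" unfolding X_def Y_def using i3 i4 by (simp add: complex_eq_iff)
  obtain t5 where t5: "t5 > 0" "r * p * cnj r + r * q * cnj (- q) + (- q) * q' * cnj r + (- q) * r * cnj (- q) = complex_of_real t5"
    using pos[of r "- q"] t2 by auto
  have "t5 = t2 * (t1 * t2 - X^2 - Y^2)"
    using arg_cong[OF t5(2), of Re] unfolding t1(2) t2(2) q q' by (simp add: power2_eq_square algebra_simps)
  then have "t1 * t2 - X^2 - Y^2 > 0" using t5(1) t2(1) by (simp add: zero_less_mult_iff)
  then show ?thesis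
    by (intro exI[of _ "(t1, t2, X, Y)"]) (simp add: t1(2) t2(2) q q')
qed

lemma diag_form_comb:
  "diag_form n A (\<lambda>l. (x0 * c0 l * y0 + x1 * c1 l * y1) + (x2 * c2 l * y2 + x3 * c3 l * y3)) S
   = (x0 * diag_form n A c0 S * y0 + x1 * diag_form n A c1 S * y1) + (x2 * diag_form n A c2 S * y2 + x3 * diag_form n A c3 S * y3)"
  unfolding diag_form_def by (simp add: sum.distrib sum_distrib_left sum_distrib_right algebra_simps)

lemma phi_bij:
  assumes AB: "is_inv A B" and BA: "is_inv B A"
  shows "bij_betw (phi 8 (fA A)) (Vpq 4 p q) (Vpq 4 p q)"
proof (rule bij_betw_byWitness[where f' = "phi 8 (fA B)"])
  show "\<forall>a\<in>Vpq 4 p q. phi 8 (fA B) (phi 8 (fA A) a) = a"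
    using phi_inv[OF AB] Vpq_fin[of _ 4 p q] by simp
  show "\<forall>a'\<in>Vpq 4 p q. phi 8 (fA A) (phi 8 (fA B) a') = a'"
    using phi_inv[OF BA] Vpq_fin[of _ 4 p q] by simp
  show "phi 8 (fA A) ` Vpq 4 p q \<subseteq> Vpq 4 p q"
    using phi_Vpq[OF fA_V10 fA_V01, of _ p q] by auto
  show "phi 8 (fA B) ` Vpq 4 p q \<subseteq> Vpq 4 p q"
    using phi_Vpq[OF fA_V10 fA_V01, of _ p q] by auto
qed

lemma transfer_bij:
  assumes AB: "is_inv A B" and BA: "is_inv B A"
    and L0: "bij_betw (\<lambda>\<alpha>. wedge \<alpha> \<Omega>0) (Vpq 4 p q) (Vpq 4 p' q')"
    and fO: "fin 8 \<Omega>0"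
  shows "bij_betw (\<lambda>\<alpha>. wedge \<alpha> (phi 8 (fA A) \<Omega>0)) (Vpq 4 p q) (Vpq 4 p' q')"
proof -
  have "bij_betw (phi 8 (fA A) \<circ> ((\<lambda>\<alpha>. wedge \<alpha> \<Omega>0) \<circ> phi 8 (fA B))) (Vpq 4 p q) (Vpq 4 p' q')"
    by (rule bij_betw_trans[OF bij_betw_trans[OF phi_bij[OF BA AB] L0] phi_bij[OF AB BA]])
  moreover have eq: "\<forall>\<alpha>\<in>Vpq 4 p q. (phi 8 (fA A) \<circ> ((\<lambda>\<alpha>. wedge \<alpha> \<Omega>0) \<circ> phi 8 (fA B))) \<alpha> = wedge \<alpha> (phi 8 (fA A) \<Omega>0)"
  proof
    fix \<alpha> assume a: "\<alpha> \<in> Vpq 4 p q"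
    have fa: "fin 8 \<alpha>" using Vpq_fin[OF a] by simp
    have QV: "phi 8 (fA B) \<alpha> \<in> Vpq 4 p q" using phi_Vpq[OF fA_V10 fA_V01 a] by simp
    have fQ: "fin 8 (phi 8 (fA B) \<alpha>)" using Vpq_fin[OF QV] by simp
    have "wedge \<alpha> (phi 8 (fA A) \<Omega>0) = wedge (phi 8 (fA A) (phi 8 (fA B) \<alpha>)) (phi 8 (fA A) \<Omega>0)"
      by (subst phi_inv[OF BA fa]) (rule refl)
    also have "\<dots> = phi 8 (fA A) (wedge (phi 8 (fA B) \<alpha>) \<Omega>0)"
      by (rule phi_mult[symmetric]) (use oneform_fA fQ fO in auto)
    finally show "(phi 8 (fA A) \<circ> ((\<lambda>\<alpha>. wedge \<alpha> \<Omega>0) \<circ> phi 8 (fA B))) \<alpha> = wedge \<alpha> (phi 8 (fA A) \<Omega>0)"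
      by simp
  qed
  moreover have "bij_betw (phi 8 (fA A) \<circ> ((\<lambda>\<alpha>. wedge \<alpha> \<Omega>0) \<circ> phi 8 (fA B))) (Vpq 4 p q) (Vpq 4 p' q')
      = bij_betw (\<lambda>\<alpha>. wedge \<alpha> (phi 8 (fA A) \<Omega>0)) (Vpq 4 p q) (Vpq 4 p' q')"
    by (rule bij_betw_cong) (use eq in blast)
  ultimately show ?thesis by simp
qed

lemma Delta_of_real: "Delta (complex_of_real a) (complex_of_real b) (complex_of_real c) (complex_of_real d) (complex_of_real e) (complex_of_real f)
  = complex_of_real (Delta a b c d e f)"
  by (simp add: Delta_def)

lemma Delta_scale_perm: "Delta (f / 4) (e / 4) (d / 4) (c / 4) (b / 4) (a / 4) = Delta a b c d e (f::complex) / 256"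
  unfolding Delta_def by (simp add: power2_eq_square divide_simps)

theorem mainTheorem12:
  fixes M :: "nat \<Rightarrow> nat \<Rightarrow> form"
  assumes "form_matrix2 4 M"
    and "griffiths_positive 4 M"
    and "diagonalized_entries 4 M"
  shows "lefschetz 4 2 (det2 M) 2 0 \<and> lefschetz 4 2 (det2 M) 1 1 \<and> lefschetz 4 2 (det2 M) 0 2"
proof -
  from assms(3) obtain A b where A: "Defs.invertible_mat 4 A" and Mb: "\<forall>i<2. \<forall>j<2. M i j = diag_form 4 A (b i j)"
    unfolding diagonalized_entries_def by blast
  obtain B where AB: "is_inv A B" using inv_exists[OF A] by blast
  have BA: "is_inv B A" by (rule is_inv_sym[OF AB])
  have M00: "M 0 0 = diag_form 4 A (b 0 0)" and M01: "M 0 1 = diag_form 4 A (b 0 1)"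
    and M10: "M 1 0 = diag_form 4 A (b 1 0)" and M11: "M 1 1 = diag_form 4 A (b 1 1)" using Mb by simp_all
  have pos: "\<exists>t>0. (\<Sum>i<2. \<Sum>j<2. \<theta> i * b i j l * cnj (\<theta> j)) = complex_of_real t"
    if th: "\<exists>i<2. \<theta> i \<noteq> 0" and l: "l < 4" for \<theta> l
  proof -
    have k: "kahler 4 (\<lambda>S. \<Sum>i<2. \<Sum>j<2. \<theta> i * M i j S * cnj (\<theta> j))"
      using assms(2) th unfolding griffiths_positive_def by blast
    have e: "(\<lambda>S. \<Sum>i<2. \<Sum>j<2. \<theta> i * M i j S * cnj (\<theta> j)) = diag_form 4 A (\<lambda>l. \<Sum>i<2. \<Sum>j<2. \<theta> i * b i j l * cnj (\<theta> j))"
    proof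
      fix S
      show "(\<Sum>i<2. \<Sum>j<2. \<theta> i * M i j S * cnj (\<theta> j)) = diag_form 4 A (\<lambda>l. \<Sum>i<2. \<Sum>j<2. \<theta> i * b i j l * cnj (\<theta> j)) S"
        unfolding sum2 M00 M01 M10 M11 diag_form_comb ..
    qed
    show ?thesis using kahler_pos[OF AB k[unfolded e] l] .
  qed
  have hd: "\<forall>l\<in>{..<4}. \<exists>v :: real \<times> real \<times> real \<times> real. b 0 0 l = complex_of_real (fst v) \<and> b 1 1 l = complex_of_real (fst (snd v))
     \<and> b 0 1 l = Complex (fst (snd (snd v))) (snd (snd (snd v))) \<and> b 1 0 l = Complex (fst (snd (snd v))) (- snd (snd (snd v)))
     \<and> fst v * fst (snd v) - (fst (snd (snd v)))^2 - (snd (snd (snd v)))^2 > 0"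
  proof
    fix l :: nat assume "l \<in> {..<4}"
    then have l: "l < 4" by simp
    show "\<exists>v :: real \<times> real \<times> real \<times> real. b 0 0 l = complex_of_real (fst v) \<and> b 1 1 l = complex_of_real (fst (snd v))
     \<and> b 0 1 l = Complex (fst (snd (snd v))) (snd (snd (snd v))) \<and> b 1 0 l = Complex (fst (snd (snd v))) (- snd (snd (snd v)))
     \<and> fst v * fst (snd v) - (fst (snd (snd v)))^2 - (snd (snd (snd v)))^2 > 0"
    proof (rule herm_data)
      fix a c :: complex assume ac: "a \<noteq> 0 \<or> c \<noteq> 0"
      define \<theta> where "\<theta> = (\<lambda>i::nat. if i = 0 then a else c)"
      have "\<exists>i<2. \<theta> i \<noteq> 0"
      proof (cases "a \<noteq> 0")
        case True then show ?thesis by (intro exI[of _ 0]) (simp add: \<theta>_def)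
      next
        case False then show ?thesis using ac by (intro exI[of _ 1]) (simp add: \<theta>_def)
      qed
      from pos[OF this l]
      show "\<exists>t>0. a * b 0 0 l * cnj a + a * b 0 1 l * cnj c + c * b 1 0 l * cnj a + c * b 1 1 l * cnj c = complex_of_real t"
        unfolding sum2 \<theta>_def by (simp add: add.assoc)
    qed
  qed
  then obtain v where v: "\<forall>l\<in>{..<4}. b 0 0 l = complex_of_real (fst (v l)) \<and> b 1 1 l = complex_of_real (fst (snd (v l)))
     \<and> b 0 1 l = Complex (fst (snd (snd (v l)))) (snd (snd (snd (v l)))) \<and> b 1 0 l = Complex (fst (snd (snd (v l)))) (- snd (snd (snd (v l))))
     \<and> fst (v l) * fst (snd (v l)) - (fst (snd (snd (v l))))^2 - (snd (snd (snd (v l))))^2 > 0"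
    by (rule bchoice[THEN exE]) blast
  define P where "P l = fst (v l)" for l
  define R where "R l = fst (snd (v l))" for l
  define X where "X l = fst (snd (snd (v l)))" for l
  define Y where "Y l = snd (snd (snd (v l)))" for l
  have bP: "b 0 0 l = complex_of_real (P l)" and bR: "b 1 1 l = complex_of_real (R l)"
    and bQ: "b 0 1 l = Complex (X l) (Y l)" and bQ': "b 1 0 l = Complex (X l) (- Y l)"
    and dpos: "P l * R l - (X l)^2 - (Y l)^2 > 0" if "l < 4" for l
    using v that unfolding P_def R_def X_def Y_def by auto
  have dpos': "\<forall>k<4. P k * R k - (X k)^2 - (Y k)^2 > 0" using dpos by simp
  have cco_eq: "cco b l m = complex_of_real (2 * lor (P l) (R l) (X l) (Y l) (P m) (R m) (X m) (Y m)) / 4"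
    if l: "l < 4" and m: "m < 4" and lm: "l \<noteq> m" for l m
    unfolding cco_def wco_def using lm bP[OF l] bP[OF m] bR[OF l] bR[OF m] bQ[OF l] bQ[OF m] bQ'[OF l] bQ'[OF m]
    by (simp add: lor_def complex_eq_iff field_simps)
  note LD = lor_data[OF dpos']
  have c01: "cco b 0 1 = complex_of_real (2 * lor (P 0) (R 0) (X 0) (Y 0) (P 1) (R 1) (X 1) (Y 1)) / 4" by (rule cco_eq) simp_all
  have c02: "cco b 0 2 = complex_of_real (2 * lor (P 0) (R 0) (X 0) (Y 0) (P 2) (R 2) (X 2) (Y 2)) / 4" by (rule cco_eq) simp_all
  have c03: "cco b 0 3 = complex_of_real (2 * lor (P 0) (R 0) (X 0) (Y 0) (P 3) (R 3) (X 3) (Y 3)) / 4" by (rule cco_eq) simp_all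
  have c12: "cco b 1 2 = complex_of_real (2 * lor (P 1) (R 1) (X 1) (Y 1) (P 2) (R 2) (X 2) (Y 2)) / 4" by (rule cco_eq) simp_all
  have c13: "cco b 1 3 = complex_of_real (2 * lor (P 1) (R 1) (X 1) (Y 1) (P 3) (R 3) (X 3) (Y 3)) / 4" by (rule cco_eq) simp_all
  have c23: "cco b 2 3 = complex_of_real (2 * lor (P 2) (R 2) (X 2) (Y 2) (P 3) (R 3) (X 3) (Y 3)) / 4" by (rule cco_eq) simp_all
  have D: "Delta (cco b 2 3) (cco b 1 3) (cco b 1 2) (cco b 0 3) (cco b 0 2) (cco b 0 1) \<noteq> 0"
  proof -
    have e: "Delta (cco b 2 3) (cco b 1 3) (cco b 1 2) (cco b 0 3) (cco b 0 2) (cco b 0 1)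
      = complex_of_real (Delta (2 * lor (P 0) (R 0) (X 0) (Y 0) (P 1) (R 1) (X 1) (Y 1)) (2 * lor (P 0) (R 0) (X 0) (Y 0) (P 2) (R 2) (X 2) (Y 2)) (2 * lor (P 0) (R 0) (X 0) (Y 0) (P 3) (R 3) (X 3) (Y 3))
          (2 * lor (P 1) (R 1) (X 1) (Y 1) (P 2) (R 2) (X 2) (Y 2)) (2 * lor (P 1) (R 1) (X 1) (Y 1) (P 3) (R 3) (X 3) (Y 3)) (2 * lor (P 2) (R 2) (X 2) (Y 2) (P 3) (R 3) (X 3) (Y 3))) / 256"
      unfolding c01 c02 c03 c12 c13 c23 Delta_scale_perm Delta_of_real ..
    have ne: "Delta (2 * lor (P 0) (R 0) (X 0) (Y 0) (P 1) (R 1) (X 1) (Y 1)) (2 * lor (P 0) (R 0) (X 0) (Y 0) (P 2) (R 2) (X 2) (Y 2)) (2 * lor (P 0) (R 0) (X 0) (Y 0) (P 3) (R 3) (X 3) (Y 3))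
          (2 * lor (P 1) (R 1) (X 1) (Y 1) (P 2) (R 2) (X 2) (Y 2)) (2 * lor (P 1) (R 1) (X 1) (Y 1) (P 3) (R 3) (X 3) (Y 3)) (2 * lor (P 2) (R 2) (X 2) (Y 2) (P 3) (R 3) (X 3) (Y 3)) \<noteq> 0"
      using LD(2) by simp
    show ?thesis unfolding e using ne by simp
  qed
  have n01: "cco b 0 1 \<noteq> 0" unfolding c01 using LD(1)[rule_format, of 0 1] by simp
  have n02: "cco b 0 2 \<noteq> 0" unfolding c02 using LD(1)[rule_format, of 0 2] by simp
  have n03: "cco b 0 3 \<noteq> 0" unfolding c03 using LD(1)[rule_format, of 0 3] by simp
  have n12: "cco b 1 2 \<noteq> 0" unfolding c12 using LD(1)[rule_format, of 1 2] by simp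
  have n13: "cco b 1 3 \<noteq> 0" unfolding c13 using LD(1)[rule_format, of 1 3] by simp
  have n23: "cco b 2 3 \<noteq> 0" unfolding c23 using LD(1)[rule_format, of 2 3] by simp
  note nz = n01 n02 n03 n12 n13 n23
  have finD: "fin 8 (Dstd c)" for c using Vpq_fin[OF Dstd_V11] by simp
  have Om: "det2 M = phi 8 (fA A) (Om0 b)"
  proof
    fix S
    have "det2 M S = wedge (phi 8 (fA A) (Dstd (b 0 0))) (phi 8 (fA A) (Dstd (b 1 1))) S
        - wedge (phi 8 (fA A) (Dstd (b 0 1))) (phi 8 (fA A) (Dstd (b 1 0))) S"
      unfolding det2_def M00 M01 M10 M11 diag_phi ..
    also have "\<dots> = phi 8 (fA A) (wedge (Dstd (b 0 0)) (Dstd (b 1 1))) S - phi 8 (fA A) (wedge (Dstd (b 0 1)) (Dstd (b 1 0))) S"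
      by (simp only: phi_mult[OF _ finD finD] oneform_fA simp_thms)
    also have "\<dots> = phi 8 (fA A) (Om0 b) S"
      unfolding Om0_def det2_def phi_diff ..
    finally show "det2 M S = phi 8 (fA A) (Om0 b) S" .
  qed
  have fO: "fin 8 (Om0 b)" using Vpq_fin[OF Om0_V22] by simp
  have OV: "det2 M \<in> Vpq 4 2 2" unfolding Om using phi_Vpq[OF fA_V10 fA_V01 Om0_V22] by simp
  have maps: "\<forall>\<beta>\<in>Vpq 4 p q. wedge \<beta> (Om0 b) \<in> Vpq 4 (p + 2) (q + 2)" for p q
    using wedge_Vpq[OF _ Om0_V22] by blast
  have ar: "(2::nat) + 2 = 4" "(0::nat) + 2 = 2" "(1::nat) + 2 = 3" by simp_all
  note m20 = maps[of 2 0, unfolded ar] and m11 = maps[of 1 1, unfolded ar] and m02 = maps[of 0 2, unfolded ar]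
  have b20: "bij_betw (\<lambda>\<alpha>. wedge \<alpha> (Om0 b)) (Vpq 4 2 0) (Vpq 4 4 2)"
    by (rule bij_wedge[OF m20]) (use inj_20[OF _ _ nz] surj_20[OF _ nz] in auto)
  have b11: "bij_betw (\<lambda>\<alpha>. wedge \<alpha> (Om0 b)) (Vpq 4 1 1) (Vpq 4 3 3)"
    by (rule bij_wedge[OF m11]) (use inj_11[OF _ _ nz D] surj_11[OF _ nz D] in auto)
  have b02: "bij_betw (\<lambda>\<alpha>. wedge \<alpha> (Om0 b)) (Vpq 4 0 2) (Vpq 4 2 4)"
    by (rule bij_wedge[OF m02]) (use inj_02[OF _ _ nz] surj_02[OF _ nz] in auto)
  show ?thesis
    unfolding lefschetz_def
    using OV transfer_bij[OF AB BA b20 fO] transfer_bij[OF AB BA b11 fO] transfer_bij[OF AB BA b02 fO]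
    by (simp add: Om)
qed

end
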